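(* Any Turing recognizable language can be weakly verified by a rational-valued 2ADfA with arbitrary bounded error $\epsilon$. Moreover, the protocol achieves perfect completeness.
   Context: An affine state of an $m$-state affine register is a vector $v\in\mathbb{R}^m$ whose entries sum to $1$; affine operators are real matrices whose columns each sum to $1$; weighting observes basis state $e_j$ with probability $|v_j|/\|v\|_1$ and collapses the register to $e_j$. A 2ADfA is a two-way deterministic finite automaton on the read-only input $¢ w\$$ (left end-marker ¢, right end-marker \$), whose head may move left, right or stay, equipped with finitely many affine registers; at each step, depending on the deterministic state and scanned symbol, each register is either updated by an affine operator or weighted, and then the deterministic state and head move are determined by the state, symbol and weighting outcomes; it halts upon entering an accepting or rejecting state. Rational-valued means all affine operators have rational entries. The 2ADfA is the verifier in an Arthur–Merlin proof system: it communicates with an all-powerful prover through a communication cell and reveals its deterministic states, head moves and weighting outcomes (public coins). Weak verification with error $\epsilon<1/2$ (rational): there is a prover such that every $w\in L$ is accepted with probability at least $1-\epsilon$, and for every $w\notin L$ and every prover, $w$ is accepted with probability at most $\epsilon$ (non-halting allowed). Perfect completeness means every $w\in L$ is accepted with probability $1$. *)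

theory Defs
  imports "HOL-Analysis.Analysis"
begin

text \<open>Deterministic single-tape Turing machine with a two-way infinite tape.
 States are the naturals below tm_nst, tape symbols the naturals below tm_nsym,
 the blank is 0, input letters are encoded injectively by tm_enc into nonblank
 tape symbols.\<close>

record 'a tm =
  tm_nst :: nat
  tm_nsym :: nat
  tm_delta :: "nat \<Rightarrow> nat \<Rightarrow> nat \<times> nat \<times> int"
  tm_start :: nat
  tm_acc :: nat
  tm_rej :: nat
  tm_enc :: "'a \<Rightarrow> nat"

definition wf_tm :: "'a tm \<Rightarrow> bool" where
  "wf_tm M \<longleftrightarrow>
     tm_start M < tm_nst M \<and> tm_acc M < tm_nst M \<and> tm_rej M < tm_nst M \<and>
     tm_acc M \<noteq> tm_rej M \<and> 0 < tm_nsym M \<and>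
     inj (tm_enc M) \<and> (\<forall>a. tm_enc M a < tm_nsym M \<and> tm_enc M a \<noteq> 0) \<and>
     (\<forall>q < tm_nst M. \<forall>s < tm_nsym M.
        fst (tm_delta M q s) < tm_nst M \<and>
        fst (snd (tm_delta M q s)) < tm_nsym M \<and>
        snd (snd (tm_delta M q s)) \<in> {-1, 0, 1})"

type_synonym tm_config = "nat \<times> int \<times> (int \<Rightarrow> nat)"

definition tm_init :: "'a tm \<Rightarrow> 'a list \<Rightarrow> tm_config" where
  "tm_init M w = (tm_start M, 0,
     (\<lambda>i. if 0 \<le> i \<and> i < int (length w) then tm_enc M (w ! nat i) else 0))"

definition tm_step :: "'a tm \<Rightarrow> tm_config \<Rightarrow> tm_config" where
  "tm_step M cfg = (case cfg of (q, h, t) \<Rightarrow>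
     if q = tm_acc M \<or> q = tm_rej M then (q, h, t)
     else (case tm_delta M q (t h) of (q', s', d) \<Rightarrow> (q', h + d, t(h := s'))))"

definition tm_accepts :: "'a tm \<Rightarrow> 'a list \<Rightarrow> bool" where
  "tm_accepts M w \<longleftrightarrow> (\<exists>n. fst ((tm_step M ^^ n) (tm_init M w)) = tm_acc M)"

definition turing_recognizable :: "'a list set \<Rightarrow> bool" where
  "turing_recognizable L \<longleftrightarrow> (\<exists>M :: 'a tm. wf_tm M \<and> (\<forall>w. w \<in> L \<longleftrightarrow> tm_accepts M w))"

datatype 'a tsym = LEnd | REnd | Sym 'a

definition tape :: "'a list \<Rightarrow> nat \<Rightarrow> 'a tsym" where
  "tape w i = (if i = 0 then LEnd else if i \<le> length w then Sym (w ! (i - 1)) else REnd)"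

text \<open>Action on one affine register: apply an affine operator (matrix, entry (i,j)
  in row i column j) or weight (measure) the register.\<close>
datatype reg_op = Apply "nat \<Rightarrow> nat \<Rightarrow> real" | Weigh

text \<open>Deterministic states are naturals below nst; communication symbols are naturals
 below ncom; register r has dimension dims ! r. act q sym c r is the action on register r
 when in state q scanning sym with communication symbol c; trans q sym c os gives the
 next state and head move, where os ! r = Some j is the outcome of weighting register r
 (None if register r was not weighted).\<close>
record 'a adfa =
  nst :: nat
  start :: nat
  accs :: nat
  rejs :: nat
  ncom :: nat
  dims :: "nat list"
  act :: "nat \<Rightarrow> 'a tsym \<Rightarrow> nat \<Rightarrow> nat \<Rightarrow> reg_op"
  trans :: "nat \<Rightarrow> 'a tsym \<Rightarrow> nat \<Rightarrow> nat option list \<Rightarrow> nat \<times> int"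

definition outcomes :: "'a adfa \<Rightarrow> nat \<Rightarrow> 'a tsym \<Rightarrow> nat \<Rightarrow> nat option list set" where
  "outcomes V q s c = {os. length os = length (dims V) \<and>
     (\<forall>r < length (dims V). (case act V q s c r of
         Apply M \<Rightarrow> os ! r = None
       | Weigh \<Rightarrow> (\<exists>j < dims V ! r. os ! r = Some j)))}"

definition wf_adfa :: "'a adfa \<Rightarrow> bool" where
  "wf_adfa V \<longleftrightarrow>
     start V < nst V \<and> accs V < nst V \<and> rejs V < nst V \<and> accs V \<noteq> rejs V \<and>
     0 < ncom V \<and> (\<forall>m \<in> set (dims V). 0 < m) \<and>
     (\<forall>q < nst V. \<forall>s. \<forall>c < ncom V. \<forall>r < length (dims V).
        (case act V q s c r of
           Apply M \<Rightarrow> (\<forall>j < dims V ! r. (\<Sum>i < dims V ! r. M i j) = 1)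
         | Weigh \<Rightarrow> True)) \<and>
     (\<forall>q < nst V. \<forall>s. \<forall>c < ncom V. \<forall>os \<in> outcomes V q s c.
        fst (trans V q s c os) < nst V \<and>
        snd (trans V q s c os) \<in> {-1, 0, 1} \<and>
        (s = LEnd \<longrightarrow> snd (trans V q s c os) \<noteq> -1) \<and>
        (s = REnd \<longrightarrow> snd (trans V q s c os) \<noteq> 1))"

definition rational_valued :: "'a adfa \<Rightarrow> bool" where
  "rational_valued V \<longleftrightarrow>
     (\<forall>q < nst V. \<forall>s. \<forall>c < ncom V. \<forall>r < length (dims V).
        (case act V q s c r of
           Apply M \<Rightarrow> (\<forall>i < dims V ! r. \<forall>j < dims V ! r. M i j \<in> \<rat>)
         | Weigh \<Rightarrow> True))"

definition basis_vec :: "nat \<Rightarrow> nat \<Rightarrow> real list" where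
  "basis_vec m j = map (\<lambda>i. if i = j then 1 else 0) [0..<m]"

definition apply_op :: "(nat \<Rightarrow> nat \<Rightarrow> real) \<Rightarrow> real list \<Rightarrow> real list" where
  "apply_op M v = map (\<lambda>i. \<Sum>j < length v. M i j * v ! j) [0..<length v]"

definition l1norm :: "real list \<Rightarrow> real" where
  "l1norm v = sum_list (map abs v)"

definition outcome_prob ::
  "'a adfa \<Rightarrow> real list list \<Rightarrow> nat option list \<Rightarrow> real" where
  "outcome_prob V regs os =
     (\<Prod>r \<in> {r. r < length (dims V) \<and> os ! r \<noteq> None}.
        \<bar>regs ! r ! the (os ! r)\<bar> / l1norm (regs ! r))"

definition update_regs ::
  "'a adfa \<Rightarrow> nat \<Rightarrow> 'a tsym \<Rightarrow> nat \<Rightarrow> real list list \<Rightarrow> nat option list \<Rightarrow> real list list" where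
  "update_regs V q s c regs os = map (\<lambda>r. case act V q s c r of
        Apply M \<Rightarrow> apply_op M (regs ! r)
      | Weigh \<Rightarrow> basis_vec (dims V ! r) (the (os ! r))) [0..<length (dims V)]"

text \<open>Public history seen by the prover: after each step the new deterministic state,
  the new head position and the weighting outcomes.\<close>
type_synonym history = "(nat \<times> nat \<times> nat option list) list"

text \<open>A prover: given the input and the public history, writes a symbol into the
  communication cell.\<close>
type_synonym 'a prover = "'a list \<Rightarrow> history \<Rightarrow> nat"

definition valid_prover :: "'a adfa \<Rightarrow> 'a prover \<Rightarrow> bool" where
  "valid_prover V P \<longleftrightarrow> (\<forall>w h. P w h < ncom V)"

fun acc_within ::
  "'a adfa \<Rightarrow> 'a prover \<Rightarrow> 'a list \<Rightarrow> nat \<Rightarrow> nat \<Rightarrow> nat \<Rightarrow> real list list \<Rightarrow> history \<Rightarrow> real" where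
  "acc_within V P w 0 q p regs h = (if q = accs V then 1 else 0)"
| "acc_within V P w (Suc n) q p regs h =
     (if q = accs V then 1 else if q = rejs V then 0 else
       (let c = P w h; s = tape w p in
        \<Sum>os \<in> outcomes V q s c.
          outcome_prob V regs os *
          (let q' = fst (trans V q s c os);
               p' = nat (int p + snd (trans V q s c os));
               regs' = update_regs V q s c regs os
           in acc_within V P w n q' p' regs' (h @ [(q', p', os)]))))"

definition init_regs :: "'a adfa \<Rightarrow> real list list" where
  "init_regs V = map (\<lambda>m. basis_vec m 0) (dims V)"

definition accept_prob :: "'a adfa \<Rightarrow> 'a prover \<Rightarrow> 'a list \<Rightarrow> real" where
  "accept_prob V P w = (SUP n. acc_within V P w n (start V) 0 (init_regs V) [])"

definition weakly_verifies :: "'a adfa \<Rightarrow> 'a list set \<Rightarrow> real \<Rightarrow> bool" where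
  "weakly_verifies V L eps \<longleftrightarrow>
     (\<exists>P. valid_prover V P \<and> (\<forall>w \<in> L. accept_prob V P w \<ge> 1 - eps)) \<and>
     (\<forall>w. w \<notin> L \<longrightarrow> (\<forall>P. valid_prover V P \<longrightarrow> accept_prob V P w \<le> eps))"

definition perfect_completeness :: "'a adfa \<Rightarrow> 'a list set \<Rightarrow> bool" where
  "perfect_completeness V L \<longleftrightarrow>
     (\<exists>P. valid_prover V P \<and> (\<forall>w \<in> L. accept_prob V P w = 1))"

end

theory Submission
  imports Defs
begin


definition KK :: "'a tm \<Rightarrow> nat" where "KK M = tm_nsym M + 1"

datatype vst = VAcc | VRej | GoR | Load | Test1 | Test2 | Sim nat | Sim2 nat nat nat

definition enc_st :: "nat \<Rightarrow> nat \<Rightarrow> vst \<Rightarrow> nat" where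
 "enc_st N K x = (case x of VAcc \<Rightarrow> 0 | VRej \<Rightarrow> 1 | GoR \<Rightarrow> 2 | Load \<Rightarrow> 3 | Test1 \<Rightarrow> 4
    | Test2 \<Rightarrow> 5 | Sim q \<Rightarrow> 6 + q | Sim2 q a b \<Rightarrow> 6 + N + (q*K + a)*K + b)"

definition dec_st :: "nat \<Rightarrow> nat \<Rightarrow> nat \<Rightarrow> vst" where
 "dec_st N K q = (if q = 0 then VAcc else if q = 1 then VRej else if q = 2 then GoR
    else if q = 3 then Load else if q = 4 then Test1 else if q = 5 then Test2
    else if q < 6 + N then Sim (q - 6)
    else Sim2 ((q - 6 - N) div K div K) ((q - 6 - N) div K mod K) ((q - 6 - N) mod K))"

definition aff :: "real \<Rightarrow> real \<Rightarrow> nat \<Rightarrow> nat \<Rightarrow> real" where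
  "aff al be i j = (if i = 0 then (if j = 0 then 1 - be else 1 - al - be)
                    else (if j = 0 then be else al + be))"

definition mk :: "real \<Rightarrow> real list" where "mk x = [1 - x, x]"

definition idop :: reg_op where "idop = Apply (aff 1 0)"

definition act_v :: "'a tm \<Rightarrow> real \<Rightarrow> vst \<Rightarrow> 'a tsym \<Rightarrow> nat \<Rightarrow> nat \<Rightarrow> reg_op" where
 "act_v M al x s c r = (let K = KK M in case x of
    GoR \<Rightarrow> (if r = 0 then Apply (aff 0 0) else if r = 1 then Apply (aff 0 0)
            else if r = 2 then Apply (aff 0 (1/2)) else Apply (aff 0 al))
  | Load \<Rightarrow> (if r = 0 then (case s of Sym y \<Rightarrow> Apply (aff (real K) (real (tm_enc M y))) | _ \<Rightarrow> idop) else idop)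
  | Test1 \<Rightarrow> (if r = 0 then (if c = 0 then Weigh else Apply (aff 1 (- real K))) else idop)
  | Test2 \<Rightarrow> (if r = 1 then (if c = 0 then Weigh else Apply (aff 1 (- real K))) else idop)
  | Sim q \<Rightarrow> (if q = tm_acc M then (if r = 3 then Weigh else idop)
           else if q = tm_rej M then idop
           else if r = 0 then Apply (aff 1 (- real (c mod K)))
           else if r = 1 then Apply (aff 1 (- real (c div K mod K)))
           else if r = 2 then Weigh else idop)
  | Sim2 q a b \<Rightarrow> (case tm_delta M q a of (q', s', d) \<Rightarrow>
       if q' < tm_nst M \<and> d \<in> {-1,0,1} then
         (if r = 0 then Apply (if d = 0 then aff 1 (real s') else if d = 1 then aff (1 / real K) 0
                               else aff (real K) (real K * real s' + real b))
          else if r = 1 then Apply (if d = 0 then aff 1 (real b) else if d = 1 then aff (real K) (real K * real b + real s')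
                               else aff (1 / real K) 0)
          else if r = 2 then Apply (aff 0 (1/2)) else idop)
       else idop)
  | _ \<Rightarrow> idop)"

definition trans_v :: "'a tm \<Rightarrow> vst \<Rightarrow> 'a tsym \<Rightarrow> nat \<Rightarrow> nat option list \<Rightarrow> vst \<times> int" where
 "trans_v M x s c os = (let K = KK M in case x of
    GoR \<Rightarrow> (if s = REnd then (Load, -1) else (GoR, 1))
  | Load \<Rightarrow> (if s = LEnd then (Sim (tm_start M), 0) else (Load, -1))
  | Test1 \<Rightarrow> (if c = 0 then (if os!0 = Some 0 then Test2 else VRej, 0) else (Test1, 0))
  | Test2 \<Rightarrow> (if c = 0 then (if os!1 = Some 0 then GoR else VRej, 0) else (Test2, 0))
  | Sim q \<Rightarrow> (if q = tm_acc M then (if os!3 = Some 1 then VAcc else GoR, 0)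
           else if q = tm_rej M then (VRej, 0)
           else (if os!2 = Some 1 then Test1 else Sim2 q (c mod K) (c div K mod K), 0))
  | Sim2 q a b \<Rightarrow> (case tm_delta M q a of (q', s', d) \<Rightarrow>
       if q' < tm_nst M \<and> d \<in> {-1,0,1} then (Sim q', 0) else (VRej, 0))
  | VAcc \<Rightarrow> (VAcc, 0) | VRej \<Rightarrow> (VRej, 0))"

definition VV :: "'a tm \<Rightarrow> rat \<Rightarrow> 'a adfa" where
 "VV M e = \<lparr> nst = 6 + tm_nst M + tm_nst M * KK M * KK M, start = 2, accs = 0, rejs = 1,
     ncom = KK M * KK M, dims = [2,2,2,2],
     act = (\<lambda>q s c r. act_v M (of_rat (e/3)) (dec_st (tm_nst M) (KK M) q) s c r),
     trans = (\<lambda>q s c os. case trans_v M (dec_st (tm_nst M) (KK M) q) s c os of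
                (x, d) \<Rightarrow> (enc_st (tm_nst M) (KK M) x, d)) \<rparr>"

lemma dec_enc_Sim2:
  assumes "0 < K" "a < K" "b < K"
  shows "dec_st N K (enc_st N K (Sim2 q a b)) = Sim2 q a b"
proof -
  have i: "(q*K + a)*K + b - 0 = (q*K + a)*K + b" by simp
  have "((q*K + a)*K + b) mod K = b" using assms by simp
  moreover have "((q*K + a)*K + b) div K = q*K + a" using assms by simp
  moreover have "(q*K + a) div K = q" "(q*K + a) mod K = a" using assms by simp_all
  ultimately show ?thesis by (simp add: dec_st_def enc_st_def)
qed

lemma dec_enc_Sim: "q < N \<Longrightarrow> dec_st N K (enc_st N K (Sim q)) = Sim q"
  by (simp add: dec_st_def enc_st_def)

lemma dec_enc_simple:
  "dec_st N K (enc_st N K VAcc) = VAcc" "dec_st N K (enc_st N K VRej) = VRej"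
  "dec_st N K (enc_st N K GoR) = GoR" "dec_st N K (enc_st N K Load) = Load"
  "dec_st N K (enc_st N K Test1) = Test1" "dec_st N K (enc_st N K Test2) = Test2"
  by (simp_all add: dec_st_def enc_st_def)

lemma KK_ge2: "wf_tm M \<Longrightarrow> 2 \<le> KK M"
  by (simp add: KK_def wf_tm_def)

lemma enc_Sim2_lt:
  assumes "q < N" "a < K" "b < K"
  shows "enc_st N K (Sim2 q a b) < 6 + N + N*K*K"
proof -
  have "q*K + a < N*K"
  proof -
    have "q*K + a < q*K + K" using assms by simp
    also have "\<dots> = (q+1)*K" by simp
    also have "\<dots> \<le> N*K" using assms by (intro mult_le_mono1) simp
    finally show ?thesis .
  qed
  hence "(q*K + a)*K + b < (q*K+a+1)*K" using assms by simp
  also have "\<dots> \<le> N*K*K" using \<open>q*K + a < N*K\<close> by (intro mult_le_mono1) simp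
  finally show ?thesis by (simp add: enc_st_def)
qed

lemma dec_lt:
  assumes "q < 6 + N + N*K*K" "0 < K"
  shows "(case dec_st N K q of Sim q' \<Rightarrow> q' < N | Sim2 q' a b \<Rightarrow> q' < N \<and> a < K \<and> b < K | _ \<Rightarrow> True)"
proof -
  { assume h: "\<not> q < 6 + N" "q \<ge> 6"
    define i where "i = q - 6 - N"
    have "i < N*K*K" using assms h by (simp add: i_def)
    hence "i div K div K < N" using assms
      by (metis div_mult2_eq less_mult_imp_div_less mult.assoc mult.commute)
    hence ?thesis using h assms by (simp add: dec_st_def i_def)
  }
  thus ?thesis by (auto simp: dec_st_def)
qed


lemma aff_colsum: "j < 2 \<Longrightarrow> (\<Sum>i<2. aff al be i j) = 1"
  by (auto simp: aff_def numeral_2_eq_2 lessThan_Suc)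

lemma aff_rat: "al \<in> \<rat> \<Longrightarrow> be \<in> \<rat> \<Longrightarrow> aff al be i j \<in> \<rat>"
  by (auto simp: aff_def)

definition goodop :: "reg_op \<Rightarrow> bool" where
  "goodop o' \<longleftrightarrow> o' = Weigh \<or> (\<exists>a b. o' = Apply (aff a b) \<and> a \<in> \<rat> \<and> b \<in> \<rat>)"

lemma goodop_aff: "a \<in> \<rat> \<Longrightarrow> b \<in> \<rat> \<Longrightarrow> goodop (Apply (aff a b))"
  by (auto simp: goodop_def)
lemma goodop_W: "goodop Weigh" by (simp add: goodop_def)
lemma goodop_id: "goodop idop" unfolding idop_def by (rule goodop_aff) auto

lemma act_v_cases:
  assumes "al \<in> \<rat>"
  shows "goodop (act_v M al x s c r)"
proof (cases x)
  case (Sim2 q a b)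
  obtain q' s' d where dd: "tm_delta M q a = (q', s', d)" by (cases "tm_delta M q a") auto
  show ?thesis using Sim2 dd
    by (simp add: act_v_def Let_def goodop_id goodop_W goodop_aff)
qed (use assms in \<open>auto simp: act_v_def Let_def goodop_id goodop_W goodop_aff split: tsym.splits\<close>)


lemma trans_v_ok:
  assumes wf: "wf_tm M"
    and xb: "case x of Sim q' \<Rightarrow> q' < tm_nst M | Sim2 q' a b \<Rightarrow> q' < tm_nst M | _ \<Rightarrow> True"
  shows "enc_st (tm_nst M) (KK M) (fst (trans_v M x s c os)) < 6 + tm_nst M + tm_nst M * KK M * KK M
     \<and> snd (trans_v M x s c os) \<in> {-1,0,1}
     \<and> (s = LEnd \<longrightarrow> snd (trans_v M x s c os) \<noteq> -1)
     \<and> (s = REnd \<longrightarrow> snd (trans_v M x s c os) \<noteq> 1)"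
proof -
  have K2: "2 \<le> KK M" using wf by (rule KK_ge2)
  show ?thesis
  proof (cases x)
    case (Sim q)
    have "c mod KK M < KK M" "c div KK M mod KK M < KK M" using K2 by auto
    hence "enc_st (tm_nst M) (KK M) (Sim2 q (c mod KK M) (c div KK M mod KK M)) < 6 + tm_nst M + tm_nst M * KK M * KK M"
      using Sim xb by (intro enc_Sim2_lt) auto
    then show ?thesis using Sim xb
      by (auto simp: trans_v_def Let_def enc_st_def)
  next
    case (Sim2 q a b)
    obtain q' s' d where dd: "tm_delta M q a = (q', s', d)" by (cases "tm_delta M q a") auto
    show ?thesis using Sim2 dd by (auto simp: trans_v_def Let_def enc_st_def)
  next
    case Load
    then show ?thesis using wf by (auto simp: trans_v_def Let_def enc_st_def wf_tm_def)
  qed (auto simp: trans_v_def Let_def enc_st_def)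
qed

lemma al_rat: "of_rat (e/3) \<in> (\<rat>::real set)" by simp

lemma wf_VV: assumes wf: "wf_tm M" shows "wf_adfa (VV M e)"
proof -
  have K2: "2 \<le> KK M" using wf by (rule KK_ge2)
  have A: "\<forall>q < nst (VV M e). \<forall>s. \<forall>c < ncom (VV M e). \<forall>r < length (dims (VV M e)).
        (case act (VV M e) q s c r of
           Apply Mx \<Rightarrow> (\<forall>j < dims (VV M e) ! r. (\<Sum>i < dims (VV M e) ! r. Mx i j) = 1)
         | Weigh \<Rightarrow> True)"
  proof (intro allI impI)
    fix q s c r assume "r < length (dims (VV M e))"
    hence r4: "dims (VV M e) ! r = 2" by (simp add: VV_def nth_Cons split: nat.splits)
    have "goodop (act (VV M e) q s c r)" by (simp add: VV_def act_v_cases)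
    then show "case act (VV M e) q s c r of
           Apply Mx \<Rightarrow> (\<forall>j < dims (VV M e) ! r. (\<Sum>i < dims (VV M e) ! r. Mx i j) = 1)
         | Weigh \<Rightarrow> True"
      unfolding goodop_def r4 using aff_colsum by auto
  qed
  have B: "\<forall>q < nst (VV M e). \<forall>s. \<forall>c < ncom (VV M e). \<forall>os \<in> outcomes (VV M e) q s c.
        fst (trans (VV M e) q s c os) < nst (VV M e) \<and>
        snd (trans (VV M e) q s c os) \<in> {-1, 0, 1} \<and>
        (s = LEnd \<longrightarrow> snd (trans (VV M e) q s c os) \<noteq> -1) \<and>
        (s = REnd \<longrightarrow> snd (trans (VV M e) q s c os) \<noteq> 1)"
  proof (intro allI impI ballI)
    fix q s c os assume q: "q < nst (VV M e)"
    have xb: "case dec_st (tm_nst M) (KK M) q of Sim q' \<Rightarrow> q' < tm_nst M | Sim2 q' a b \<Rightarrow> q' < tm_nst M | _ \<Rightarrow> True"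
      using dec_lt[of q "tm_nst M" "KK M"] q K2 by (auto simp: VV_def split: vst.splits)
    obtain y d where td: "trans_v M (dec_st (tm_nst M) (KK M) q) s c os = (y, d)" by fastforce
    have tt: "trans (VV M e) q s c os = (enc_st (tm_nst M) (KK M) y, d)"
      by (simp add: VV_def td)
    show "fst (trans (VV M e) q s c os) < nst (VV M e) \<and>
        snd (trans (VV M e) q s c os) \<in> {-1, 0, 1} \<and>
        (s = LEnd \<longrightarrow> snd (trans (VV M e) q s c os) \<noteq> -1) \<and>
        (s = REnd \<longrightarrow> snd (trans (VV M e) q s c os) \<noteq> 1)"
      using trans_v_ok[OF wf xb, of s c os] unfolding tt td by (simp add: VV_def)
  qed
  have C: "start (VV M e) < nst (VV M e) \<and> accs (VV M e) < nst (VV M e) \<and> rejs (VV M e) < nst (VV M e) \<and>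
      accs (VV M e) \<noteq> rejs (VV M e) \<and> 0 < ncom (VV M e) \<and> (\<forall>m \<in> set (dims (VV M e)). 0 < m)"
    using K2 by (simp add: VV_def)
  show ?thesis unfolding wf_adfa_def using A B C by blast
qed

lemma rat_VV: "rational_valued (VV M e)"
  unfolding rational_valued_def
proof (intro allI impI)
  fix q s c r
  have "goodop (act (VV M e) q s c r)" by (simp add: VV_def act_v_cases)
  then show "case act (VV M e) q s c r of
           Apply Mx \<Rightarrow> (\<forall>i < dims (VV M e) ! r. \<forall>j < dims (VV M e) ! r. Mx i j \<in> \<rat>)
         | Weigh \<Rightarrow> True"
    unfolding goodop_def using aff_rat by auto
qed


definition R4 :: "real \<Rightarrow> real \<Rightarrow> real \<Rightarrow> real \<Rightarrow> real list list" where
  "R4 x0 x1 x2 x3 = [mk x0, mk x1, mk x2, mk x3]"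

definition pr0 :: "real \<Rightarrow> real" where "pr0 x = \<bar>1 - x\<bar> / (\<bar>1 - x\<bar> + \<bar>x\<bar>)"
definition pr1 :: "real \<Rightarrow> real" where "pr1 x = \<bar>x\<bar> / (\<bar>1 - x\<bar> + \<bar>x\<bar>)"

lemma den_pos: "(\<bar>1 - x\<bar> + \<bar>x\<bar>::real) \<ge> 1" by linarith

lemma pr_sum: "pr0 x + pr1 x = 1"
  using den_pos[of x] by (simp add: pr0_def pr1_def add_divide_distrib[symmetric])

lemma pr_nonneg: "pr0 x \<ge> 0" "pr1 x \<ge> 0" by (simp_all add: pr0_def pr1_def)
lemma pr_le1: "pr0 x \<le> 1" "pr1 x \<le> 1" using pr_sum[of x] pr_nonneg[of x] by linarith+

lemma pr_half: "pr0 (1/2) = 1/2" "pr1 (1/2) = 1/2" by (simp_all add: pr0_def pr1_def)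
lemma pr_prob: "0 \<le> x \<Longrightarrow> x \<le> 1 \<Longrightarrow> pr0 x = 1 - x \<and> pr1 x = x" by (simp add: pr0_def pr1_def)
lemma pr_zero: "pr0 0 = 1" "pr1 0 = 0" by (simp_all add: pr0_def pr1_def)

lemma apply_aff: "apply_op (aff a b) (mk x) = mk (a * x + b)"
  by (simp add: apply_op_def aff_def mk_def lessThan_Suc numeral_2_eq_2 upt_rec algebra_simps)

lemma basis_mk: "basis_vec 2 0 = mk 0" "basis_vec 2 (Suc 0) = mk 1"
  by (simp_all add: basis_vec_def mk_def upt_rec numeral_2_eq_2)

lemma l1_mk: "l1norm (mk x) = \<bar>1 - x\<bar> + \<bar>x\<bar>" by (simp add: l1norm_def mk_def)

definition ow :: "nat \<Rightarrow> nat \<Rightarrow> nat option list" where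
  "ow i j = [if i = 0 then Some j else None, if i = 1 then Some j else None,
             if i = 2 then Some j else None, if i = 3 then Some j else None]"

definition onone :: "nat option list" where "onone = [None, None, None, None]"

lemma len4: "length os = 4 \<longleftrightarrow> (\<exists>a b c d. os = [a,b,c,d])"
  by (auto simp: numeral_eq_Suc length_Suc_conv)

locale vs =
  fixes M :: "'a tm" and e :: rat
  assumes wf: "wf_tm M"
begin

abbreviation "V \<equiv> VV M e"
abbreviation "N \<equiv> tm_nst M"
abbreviation "K \<equiv> KK M"
abbreviation "al \<equiv> (of_rat (e/3) :: real)"
abbreviation "E \<equiv> enc_st N K"

lemma K2: "2 \<le> K" using wf by (rule KK_ge2)

lemma dims_VV: "dims V = [2,2,2,2]" by (simp add: VV_def)

lemma outcomes_char:
  "os \<in> outcomes V q s c \<longleftrightarrow> length os = 4 \<and>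
     (\<forall>r<4. (if act V q s c r = Weigh then (\<exists>j<2. os ! r = Some j) else os ! r = None))"
proof -
  have cw: "\<And>x A B. (case x of Apply _ \<Rightarrow> A | Weigh \<Rightarrow> B) = (if x = Weigh then B else A)"
    by (case_tac x) auto
  have n2: "\<And>r. r < 4 \<Longrightarrow> [2,2,2,2::nat] ! r = 2"
    by (auto simp: nth_Cons split: nat.splits)
  show ?thesis unfolding outcomes_def dims_VV cw using n2 by auto
qed

lemma all4: "(\<forall>r<(4::nat). P r) \<longleftrightarrow> P 0 \<and> P 1 \<and> P 2 \<and> (P 3 :: bool)"
proof -
  have lt4: "\<And>r::nat. r < 4 \<longleftrightarrow> r = 0 \<or> r = 1 \<or> r = 2 \<or> r = 3" by arith
  show ?thesis unfolding lt4 by auto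
qed

lemma outcomes_noW:
  assumes "\<forall>r<4. act V q s c r \<noteq> Weigh"
  shows "outcomes V q s c = {onone}"
proof -
  have "os \<in> outcomes V q s c \<longleftrightarrow> length os = 4 \<and> os ! 0 = None \<and> os ! 1 = None \<and> os ! 2 = None \<and> os ! 3 = None" for os
    unfolding outcomes_char all4 using assms by simp
  moreover have "length os = 4 \<and> os ! 0 = None \<and> os ! 1 = None \<and> os ! 2 = None \<and> os ! 3 = None \<longleftrightarrow> os = onone" for os
  proof
    assume "length os = 4 \<and> os ! 0 = None \<and> os ! 1 = None \<and> os ! 2 = None \<and> os ! 3 = None"
    then obtain a b c d where "os = [a,b,c,d]" "a = None" "b = None" "c = None" "d = None"
      unfolding len4 by auto
    then show "os = onone" by (simp add: onone_def)
  qed (simp add: onone_def)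
  ultimately show ?thesis by auto
qed

lemma ex2: "(\<exists>j<2. x = Some (j::nat)) \<longleftrightarrow> x = Some 0 \<or> x = Some 1"
  by (auto simp: less_2_cases_iff)

lemma outcomes_W0:
  assumes "act V q s c 0 = Weigh" "act V q s c 1 \<noteq> Weigh" "act V q s c 2 \<noteq> Weigh" "act V q s c 3 \<noteq> Weigh"
  shows "outcomes V q s c = {ow 0 0, ow 0 1}"
proof -
  have "os \<in> outcomes V q s c \<longleftrightarrow> length os = 4 \<and> (os ! 0 = Some 0 \<or> os ! 0 = Some 1) \<and> os ! 1 = None \<and> os ! 2 = None \<and> os ! 3 = None" for os
    unfolding outcomes_char all4 ex2 using assms by simp
  moreover have "length os = 4 \<and> (os ! 0 = Some 0 \<or> os ! 0 = Some 1) \<and> os ! 1 = None \<and> os ! 2 = None \<and> os ! 3 = None \<longleftrightarrow> os = ow 0 0 \<or> os = ow 0 1" for os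
  proof
    assume "length os = 4 \<and> (os ! 0 = Some 0 \<or> os ! 0 = Some 1) \<and> os ! 1 = None \<and> os ! 2 = None \<and> os ! 3 = None"
    then obtain a b c d where "os = [a,b,c,d]" "(a = Some 0 \<or> a = Some 1) \<and> b = None \<and> c = None \<and> d = None"
      unfolding len4 by auto
    then show "os = ow 0 0 \<or> os = ow 0 1" by (auto simp: ow_def)
  next
    assume "os = ow 0 0 \<or> os = ow 0 1" then show "length os = 4 \<and> (os ! 0 = Some 0 \<or> os ! 0 = Some 1) \<and> os ! 1 = None \<and> os ! 2 = None \<and> os ! 3 = None"
      by (auto simp: ow_def)
  qed
  ultimately show ?thesis by auto
qed

lemma outcomes_W1:
  assumes "act V q s c 1 = Weigh" "act V q s c 0 \<noteq> Weigh" "act V q s c 2 \<noteq> Weigh" "act V q s c 3 \<noteq> Weigh"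
  shows "outcomes V q s c = {ow 1 0, ow 1 1}"
proof -
  have "os \<in> outcomes V q s c \<longleftrightarrow> length os = 4 \<and> os ! 0 = None \<and> (os ! 1 = Some 0 \<or> os ! 1 = Some 1) \<and> os ! 2 = None \<and> os ! 3 = None" for os
    unfolding outcomes_char all4 ex2 using assms by simp
  moreover have "length os = 4 \<and> os ! 0 = None \<and> (os ! 1 = Some 0 \<or> os ! 1 = Some 1) \<and> os ! 2 = None \<and> os ! 3 = None \<longleftrightarrow> os = ow 1 0 \<or> os = ow 1 1" for os
  proof
    assume "length os = 4 \<and> os ! 0 = None \<and> (os ! 1 = Some 0 \<or> os ! 1 = Some 1) \<and> os ! 2 = None \<and> os ! 3 = None"
    then obtain a b c d where "os = [a,b,c,d]" "a = None \<and> (b = Some 0 \<or> b = Some 1) \<and> c = None \<and> d = None"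
      unfolding len4 by auto
    then show "os = ow 1 0 \<or> os = ow 1 1" by (auto simp: ow_def)
  next
    assume "os = ow 1 0 \<or> os = ow 1 1" then show "length os = 4 \<and> os ! 0 = None \<and> (os ! 1 = Some 0 \<or> os ! 1 = Some 1) \<and> os ! 2 = None \<and> os ! 3 = None"
      by (auto simp: ow_def)
  qed
  ultimately show ?thesis by auto
qed

lemma outcomes_W2:
  assumes "act V q s c 2 = Weigh" "act V q s c 0 \<noteq> Weigh" "act V q s c 1 \<noteq> Weigh" "act V q s c 3 \<noteq> Weigh"
  shows "outcomes V q s c = {ow 2 0, ow 2 1}"
proof -
  have "os \<in> outcomes V q s c \<longleftrightarrow> length os = 4 \<and> os ! 0 = None \<and> os ! 1 = None \<and> (os ! 2 = Some 0 \<or> os ! 2 = Some 1) \<and> os ! 3 = None" for os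
    unfolding outcomes_char all4 ex2 using assms by simp
  moreover have "length os = 4 \<and> os ! 0 = None \<and> os ! 1 = None \<and> (os ! 2 = Some 0 \<or> os ! 2 = Some 1) \<and> os ! 3 = None \<longleftrightarrow> os = ow 2 0 \<or> os = ow 2 1" for os
  proof
    assume "length os = 4 \<and> os ! 0 = None \<and> os ! 1 = None \<and> (os ! 2 = Some 0 \<or> os ! 2 = Some 1) \<and> os ! 3 = None"
    then obtain a b c d where "os = [a,b,c,d]" "a = None \<and> b = None \<and> (c = Some 0 \<or> c = Some 1) \<and> d = None"
      unfolding len4 by auto
    then show "os = ow 2 0 \<or> os = ow 2 1" by (auto simp: ow_def)
  next
    assume "os = ow 2 0 \<or> os = ow 2 1" then show "length os = 4 \<and> os ! 0 = None \<and> os ! 1 = None \<and> (os ! 2 = Some 0 \<or> os ! 2 = Some 1) \<and> os ! 3 = None"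
      by (auto simp: ow_def)
  qed
  ultimately show ?thesis by auto
qed

lemma outcomes_W3:
  assumes "act V q s c 3 = Weigh" "act V q s c 0 \<noteq> Weigh" "act V q s c 1 \<noteq> Weigh" "act V q s c 2 \<noteq> Weigh"
  shows "outcomes V q s c = {ow 3 0, ow 3 1}"
proof -
  have "os \<in> outcomes V q s c \<longleftrightarrow> length os = 4 \<and> os ! 0 = None \<and> os ! 1 = None \<and> os ! 2 = None \<and> (os ! 3 = Some 0 \<or> os ! 3 = Some 1)" for os
    unfolding outcomes_char all4 ex2 using assms by simp
  moreover have "length os = 4 \<and> os ! 0 = None \<and> os ! 1 = None \<and> os ! 2 = None \<and> (os ! 3 = Some 0 \<or> os ! 3 = Some 1) \<longleftrightarrow> os = ow 3 0 \<or> os = ow 3 1" for os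
  proof
    assume "length os = 4 \<and> os ! 0 = None \<and> os ! 1 = None \<and> os ! 2 = None \<and> (os ! 3 = Some 0 \<or> os ! 3 = Some 1)"
    then obtain a b c d where "os = [a,b,c,d]" "a = None \<and> b = None \<and> c = None \<and> (d = Some 0 \<or> d = Some 1)"
      unfolding len4 by auto
    then show "os = ow 3 0 \<or> os = ow 3 1" by (auto simp: ow_def)
  next
    assume "os = ow 3 0 \<or> os = ow 3 1" then show "length os = 4 \<and> os ! 0 = None \<and> os ! 1 = None \<and> os ! 2 = None \<and> (os ! 3 = Some 0 \<or> os ! 3 = Some 1)"
      by (auto simp: ow_def)
  qed
  ultimately show ?thesis by auto
qed

end


context vs begin

lemma lt4: "(r::nat) < 4 \<longleftrightarrow> r = 0 \<or> r = 1 \<or> r = 2 \<or> r = 3" by arith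

lemma acc_rej: "acc_within V P w n 1 p regs h = 0"
  by (cases n) (simp_all add: VV_def)

lemma acc_acc: "acc_within V P w n 0 p regs h = 1"
  by (cases n) (simp_all add: VV_def)

lemma acc_nonneg: "acc_within V P w n q p regs h \<ge> 0"
proof (induction n arbitrary: q p regs h)
  case 0 then show ?case by simp
next
  case (Suc n)
  have op: "outcome_prob V regs os \<ge> 0" for os
    unfolding outcome_prob_def l1norm_def by (auto intro!: prod_nonneg divide_nonneg_nonneg sum_list_nonneg)
  show ?case using Suc op by (simp add: Let_def sum_nonneg)
qed

lemma step_gen:
  assumes "q \<noteq> 0" "q \<noteq> 1"
  shows "acc_within V P w (Suc n) q p regs h =
    (\<Sum>os \<in> outcomes V q (tape w p) (P w h). outcome_prob V regs os *
       acc_within V P w n (fst (trans V q (tape w p) (P w h) os))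
         (nat (int p + snd (trans V q (tape w p) (P w h) os)))
         (update_regs V q (tape w p) (P w h) regs os)
         (h @ [(fst (trans V q (tape w p) (P w h) os), nat (int p + snd (trans V q (tape w p) (P w h) os)), os)]))"
  using assms by (simp add: Let_def VV_def)

lemma op_none: "outcome_prob V regs onone = 1"
proof -
  have "\<forall>r<4. onone ! r = None" unfolding all4 by (simp add: onone_def)
  then have e: "{r. r < length (dims V) \<and> onone ! r \<noteq> None} = {}"
    unfolding dims_VV by auto
  show ?thesis unfolding outcome_prob_def e by simp
qed

lemma step_noW:
  assumes "q \<noteq> 0" "q \<noteq> 1" "\<forall>r<4. act V q (tape w p) (P w h) r \<noteq> Weigh"
  shows "acc_within V P w (Suc n) q p regs h =
       acc_within V P w n (fst (trans V q (tape w p) (P w h) onone))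
         (nat (int p + snd (trans V q (tape w p) (P w h) onone)))
         (update_regs V q (tape w p) (P w h) regs onone)
         (h @ [(fst (trans V q (tape w p) (P w h) onone), nat (int p + snd (trans V q (tape w p) (P w h) onone)), onone)])"
  unfolding step_gen[OF assms(1,2)] outcomes_noW[OF assms(3)] by (simp add: op_none)

lemma ow_set: "i < 4 \<Longrightarrow> {r. r < length (dims V) \<and> ow i j ! r \<noteq> None} = {i}"
  unfolding lt4 dims_VV by (elim disjE) (auto simp: ow_def less_Suc_eq)

lemma op_ow: "i < 4 \<Longrightarrow> regs ! i = mk x \<Longrightarrow> outcome_prob V regs (ow i 0) = pr0 x"
  "i < 4 \<Longrightarrow> regs ! i = mk x \<Longrightarrow> outcome_prob V regs (ow i 1) = pr1 x"
proof -
  assume i: "i < 4" "regs ! i = mk x"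
  have "\<forall>i<4. ow i j ! i = Some j" for j unfolding all4 by (simp add: ow_def)
  then have a: "ow i j ! i = Some j" for j using i(1) by blast
  show "outcome_prob V regs (ow i 0) = pr0 x" "outcome_prob V regs (ow i 1) = pr1 x"
    unfolding outcome_prob_def ow_set[OF i(1)] using i a by (simp_all add: l1norm_def pr0_def pr1_def mk_def)
qed

lemma ow_neq: "i < 4 \<Longrightarrow> ow i 0 \<noteq> ow i 1"
proof -
  assume i: "i < 4"
  have "\<forall>i<4. ow i 0 ! i \<noteq> ow i 1 ! i" unfolding all4 by (simp add: ow_def)
  then show ?thesis using i by metis
qed

lemma step_W:
  assumes "q \<noteq> 0" "q \<noteq> 1" "i < 4" "act V q (tape w p) (P w h) i = Weigh"
    "\<forall>r<4. r \<noteq> i \<longrightarrow> act V q (tape w p) (P w h) r \<noteq> Weigh" "regs ! i = mk x"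
  shows "acc_within V P w (Suc n) q p regs h =
    pr0 x * acc_within V P w n (fst (trans V q (tape w p) (P w h) (ow i 0)))
         (nat (int p + snd (trans V q (tape w p) (P w h) (ow i 0))))
         (update_regs V q (tape w p) (P w h) regs (ow i 0))
         (h @ [(fst (trans V q (tape w p) (P w h) (ow i 0)), nat (int p + snd (trans V q (tape w p) (P w h) (ow i 0))), ow i 0)])
  + pr1 x * acc_within V P w n (fst (trans V q (tape w p) (P w h) (ow i 1)))
         (nat (int p + snd (trans V q (tape w p) (P w h) (ow i 1))))
         (update_regs V q (tape w p) (P w h) regs (ow i 1))
         (h @ [(fst (trans V q (tape w p) (P w h) (ow i 1)), nat (int p + snd (trans V q (tape w p) (P w h) (ow i 1))), ow i 1)])"
proof -
  have o: "outcomes V q (tape w p) (P w h) = {ow i 0, ow i 1}"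
  proof -
    have "i = 0 \<or> i = 1 \<or> i = 2 \<or> i = 3" using assms(3) by arith
    then show ?thesis
    proof (elim disjE)
      assume i: "i = 0"
      have "\<And>r. r < 4 \<Longrightarrow> r \<noteq> 0 \<Longrightarrow> act V q (tape w p) (P w h) r \<noteq> Weigh" using assms(5) i by auto
      then show ?thesis unfolding i using assms(4) i by (intro outcomes_W0) auto
    next
      assume i: "i = 1"
      have "\<And>r. r < 4 \<Longrightarrow> r \<noteq> 1 \<Longrightarrow> act V q (tape w p) (P w h) r \<noteq> Weigh" using assms(5) i by auto
      then show ?thesis unfolding i using assms(4) i by (intro outcomes_W1) auto
    next
      assume i: "i = 2"
      have "\<And>r. r < 4 \<Longrightarrow> r \<noteq> 2 \<Longrightarrow> act V q (tape w p) (P w h) r \<noteq> Weigh" using assms(5) i by auto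
      then show ?thesis unfolding i using assms(4) i by (intro outcomes_W2) auto
    next
      assume i: "i = 3"
      have "\<And>r. r < 4 \<Longrightarrow> r \<noteq> 3 \<Longrightarrow> act V q (tape w p) (P w h) r \<noteq> Weigh" using assms(5) i by auto
      then show ?thesis unfolding i using assms(4) i by (intro outcomes_W3) auto
    qed
  qed
  show ?thesis unfolding step_gen[OF assms(1,2)] o
    using ow_neq[OF assms(3)] op_ow[OF assms(3,6)] by simp
qed

lemma update_R4:
  "update_regs V q s c (R4 x0 x1 x2 x3) os =
     [ (case act V q s c 0 of Apply Mx \<Rightarrow> apply_op Mx (mk x0) | Weigh \<Rightarrow> basis_vec 2 (the (os ! 0))),
       (case act V q s c 1 of Apply Mx \<Rightarrow> apply_op Mx (mk x1) | Weigh \<Rightarrow> basis_vec 2 (the (os ! 1))),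
       (case act V q s c 2 of Apply Mx \<Rightarrow> apply_op Mx (mk x2) | Weigh \<Rightarrow> basis_vec 2 (the (os ! 2))),
       (case act V q s c 3 of Apply Mx \<Rightarrow> apply_op Mx (mk x3) | Weigh \<Rightarrow> basis_vec 2 (the (os ! 3)))]"
proof -
  have u: "[0..<length [2,2,2,2::nat]] = [0,1,2,3]" by (simp add: upt_rec)
  show ?thesis unfolding update_regs_def dims_VV u by (auto simp: R4_def split: reg_op.split)
qed

lemma R4_nth: "R4 x0 x1 x2 x3 ! 0 = mk x0" "R4 x0 x1 x2 x3 ! 1 = mk x1"
  "R4 x0 x1 x2 x3 ! 2 = mk x2" "R4 x0 x1 x2 x3 ! 3 = mk x3"
  by (simp_all add: R4_def)

lemma act_E: "dec_st N K q = X \<Longrightarrow> act V q s c r = act_v M al X s c r"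
  by (simp add: VV_def)
lemma trans_E: "dec_st N K q = X \<Longrightarrow> trans V q s c os = (E (fst (trans_v M X s c os)), snd (trans_v M X s c os))"
  by (simp add: VV_def split: prod.splits)

end


declare acc_within.simps(2) [simp del]

context vs begin

lemma K0: "0 < K" using K2 by simp

lemma dec_GoR: "dec_st N K (E GoR) = GoR" and dec_Load: "dec_st N K (E Load) = Load"
  and dec_T1: "dec_st N K (E Test1) = Test1" and dec_T2: "dec_st N K (E Test2) = Test2"
  by (simp_all add: dec_enc_simple)

lemma E_simps: "E GoR = 2" "E Load = 3" "E Test1 = 4" "E Test2 = 5" "E VAcc = 0" "E VRej = 1"
  "E (Sim q) = 6 + q" "E (Sim2 q a b) = 6 + N + (q*K + a)*K + b"
  by (simp_all add: enc_st_def)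

lemma upd_GoR: "update_regs V (E GoR) s c (R4 x0 x1 x2 x3) os = R4 0 0 (1/2) al"
  unfolding update_R4 act_E[OF dec_GoR] by (simp add: act_v_def Let_def apply_aff R4_def)

lemma step_GoR:
  "acc_within V P w (Suc n) (E GoR) p (R4 x0 x1 x2 x3) h =
   acc_within V P w n (E (if tape w p = REnd then Load else GoR)) (if tape w p = REnd then p - 1 else Suc p)
     (R4 0 0 (1/2) al) (h @ [(E (if tape w p = REnd then Load else GoR), if tape w p = REnd then p - 1 else Suc p, onone)])"
  (is "_ = ?rhs")
proof -
  have a: "\<forall>r<4. act V (E GoR) (tape w p) (P w h) r \<noteq> Weigh"
    unfolding all4 act_E[OF dec_GoR] by (simp add: act_v_def Let_def)
  have t: "trans V (E GoR) (tape w p) (P w h) onone = (E (if tape w p = REnd then Load else GoR), if tape w p = REnd then -1 else 1)"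
    unfolding trans_E[OF dec_GoR] by (simp add: trans_v_def Let_def)
  have pp: "nat (int p + (if tape w p = REnd then -1 else 1)) = (if tape w p = REnd then p - 1 else Suc p)" by auto
  have "acc_within V P w (Suc n) (E GoR) p (R4 x0 x1 x2 x3) h = acc_within V P w n (fst (trans V (E GoR) (tape w p) (P w h) onone))
         (nat (int p + snd (trans V (E GoR) (tape w p) (P w h) onone)))
         (update_regs V (E GoR) (tape w p) (P w h) (R4 x0 x1 x2 x3) onone)
         (h @ [(fst (trans V (E GoR) (tape w p) (P w h) onone), nat (int p + snd (trans V (E GoR) (tape w p) (P w h) onone)), onone)])"
    by (rule step_noW) (use a in \<open>simp_all add: E_simps\<close>)
  also have "\<dots> = ?rhs" unfolding t upd_GoR using pp by simp
  finally show ?thesis .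
qed


lemma dec_Sim: "q < N \<Longrightarrow> dec_st N K (E (Sim q)) = Sim q" by (rule dec_enc_Sim)
lemma dec_Sim2: "a < K \<Longrightarrow> b < K \<Longrightarrow> dec_st N K (E (Sim2 q a b)) = Sim2 q a b"
  using K0 by (rule dec_enc_Sim2)

lemma E_ne: "E X = 0 \<longleftrightarrow> X = VAcc" "E X = 1 \<longleftrightarrow> X = VRej"
  by (cases X; simp add: enc_st_def)+

lemma accrej: "tm_acc M \<noteq> tm_rej M" "tm_start M < N" "tm_acc M < N" "tm_rej M < N"
  using wf by (auto simp: wf_tm_def)

lemma upd_Load: "update_regs V (E Load) (Sym y) c (R4 x0 x1 x2 x3) os = R4 (real K * x0 + real (tm_enc M y)) x1 x2 x3"
  unfolding update_R4 act_E[OF dec_Load] by (simp add: act_v_def Let_def apply_aff R4_def idop_def)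
lemma upd_Load_L: "update_regs V (E Load) LEnd c (R4 x0 x1 x2 x3) os = R4 x0 x1 x2 x3"
  unfolding update_R4 act_E[OF dec_Load] by (simp add: act_v_def Let_def apply_aff R4_def idop_def)

lemma step_Load:
  assumes "tape w p = Sym y"
  shows "acc_within V P w (Suc n) (E Load) p (R4 x0 x1 x2 x3) h =
   acc_within V P w n (E Load) (p - 1) (R4 (real K * x0 + real (tm_enc M y)) x1 x2 x3) (h @ [(E Load, p - 1, onone)])"
  (is "_ = ?rhs")
proof -
  have a: "\<forall>r<4. act V (E Load) (tape w p) (P w h) r \<noteq> Weigh"
    unfolding all4 act_E[OF dec_Load] assms by (simp add: act_v_def Let_def idop_def)
  have t: "trans V (E Load) (tape w p) (P w h) onone = (E Load, -1)"
    unfolding trans_E[OF dec_Load] assms by (simp add: trans_v_def Let_def)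
  have "acc_within V P w (Suc n) (E Load) p (R4 x0 x1 x2 x3) h = acc_within V P w n (fst (trans V (E Load) (tape w p) (P w h) onone))
         (nat (int p + snd (trans V (E Load) (tape w p) (P w h) onone)))
         (update_regs V (E Load) (tape w p) (P w h) (R4 x0 x1 x2 x3) onone)
         (h @ [(fst (trans V (E Load) (tape w p) (P w h) onone), nat (int p + snd (trans V (E Load) (tape w p) (P w h) onone)), onone)])"
    by (rule step_noW) (use a in \<open>simp_all add: E_simps\<close>)
  also have "\<dots> = ?rhs" unfolding t unfolding assms upd_Load by (simp add: nat_diff_distrib')
  finally show ?thesis .
qed

lemma step_Load_L:
  assumes "tape w p = LEnd"
  shows "acc_within V P w (Suc n) (E Load) p (R4 x0 x1 x2 x3) h =
   acc_within V P w n (E (Sim (tm_start M))) p (R4 x0 x1 x2 x3) (h @ [(E (Sim (tm_start M)), p, onone)])"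
  (is "_ = ?rhs")
proof -
  have a: "\<forall>r<4. act V (E Load) (tape w p) (P w h) r \<noteq> Weigh"
    unfolding all4 act_E[OF dec_Load] assms by (simp add: act_v_def Let_def idop_def)
  have t: "trans V (E Load) (tape w p) (P w h) onone = (E (Sim (tm_start M)), 0)"
    unfolding trans_E[OF dec_Load] assms by (simp add: trans_v_def Let_def)
  have "acc_within V P w (Suc n) (E Load) p (R4 x0 x1 x2 x3) h = acc_within V P w n (fst (trans V (E Load) (tape w p) (P w h) onone))
         (nat (int p + snd (trans V (E Load) (tape w p) (P w h) onone)))
         (update_regs V (E Load) (tape w p) (P w h) (R4 x0 x1 x2 x3) onone)
         (h @ [(fst (trans V (E Load) (tape w p) (P w h) onone), nat (int p + snd (trans V (E Load) (tape w p) (P w h) onone)), onone)])"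
    by (rule step_noW) (use a in \<open>simp_all add: E_simps\<close>)
  also have "\<dots> = ?rhs" unfolding t unfolding assms upd_Load_L by simp
  finally show ?thesis .
qed

lemma upd_T1_go: "c \<noteq> 0 \<Longrightarrow> update_regs V (E Test1) s c (R4 x0 x1 x2 x3) os = R4 (x0 - real K) x1 x2 x3"
  unfolding update_R4 act_E[OF dec_T1] by (simp add: act_v_def Let_def apply_aff R4_def idop_def)
lemma upd_T1_stop: "update_regs V (E Test1) s 0 (R4 x0 x1 x2 x3) (ow 0 0) = R4 0 x1 x2 x3"
  unfolding update_R4 act_E[OF dec_T1] by (simp add: act_v_def Let_def apply_aff R4_def idop_def ow_def basis_mk)

lemma step_T1_go:
  assumes "P w h \<noteq> 0"
  shows "acc_within V P w (Suc n) (E Test1) p (R4 x0 x1 x2 x3) h =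
   acc_within V P w n (E Test1) p (R4 (x0 - real K) x1 x2 x3) (h @ [(E Test1, p, onone)])"
  (is "_ = ?rhs")
proof -
  have a: "\<forall>r<4. act V (E Test1) (tape w p) (P w h) r \<noteq> Weigh"
    unfolding all4 act_E[OF dec_T1] using assms by (simp add: act_v_def Let_def idop_def)
  have t: "trans V (E Test1) (tape w p) (P w h) onone = (E Test1, 0)"
    unfolding trans_E[OF dec_T1] using assms by (simp add: trans_v_def Let_def)
  have "acc_within V P w (Suc n) (E Test1) p (R4 x0 x1 x2 x3) h = acc_within V P w n (fst (trans V (E Test1) (tape w p) (P w h) onone))
         (nat (int p + snd (trans V (E Test1) (tape w p) (P w h) onone)))
         (update_regs V (E Test1) (tape w p) (P w h) (R4 x0 x1 x2 x3) onone)
         (h @ [(fst (trans V (E Test1) (tape w p) (P w h) onone), nat (int p + snd (trans V (E Test1) (tape w p) (P w h) onone)), onone)])"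
    by (rule step_noW) (use a in \<open>simp_all add: E_simps\<close>)
  also have "\<dots> = ?rhs" unfolding t upd_T1_go[OF assms] by simp
  finally show ?thesis .
qed

lemma step_T1_stop:
  assumes "P w h = 0"
  shows "acc_within V P w (Suc n) (E Test1) p (R4 x0 x1 x2 x3) h =
   pr0 x0 * acc_within V P w n (E Test2) p (R4 0 x1 x2 x3) (h @ [(E Test2, p, ow 0 0)])"
  (is "_ = ?rhs")
proof -
  have a: "act V (E Test1) (tape w p) (P w h) 0 = Weigh" "\<forall>r<4. r \<noteq> 0 \<longrightarrow> act V (E Test1) (tape w p) (P w h) r \<noteq> Weigh"
    unfolding all4 act_E[OF dec_T1] using assms by (simp_all add: act_v_def Let_def idop_def)
  have t: "trans V (E Test1) (tape w p) (P w h) (ow 0 0) = (E Test2, 0)"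
     "trans V (E Test1) (tape w p) (P w h) (ow 0 1) = (E VRej, 0)"
    unfolding trans_E[OF dec_T1] using assms by (simp_all add: trans_v_def Let_def ow_def)
  have "acc_within V P w (Suc n) (E Test1) p (R4 x0 x1 x2 x3) h = 
    pr0 x0 * acc_within V P w n (fst (trans V (E Test1) (tape w p) (P w h) (ow 0 0)))
         (nat (int p + snd (trans V (E Test1) (tape w p) (P w h) (ow 0 0))))
         (update_regs V (E Test1) (tape w p) (P w h) (R4 x0 x1 x2 x3) (ow 0 0))
         (h @ [(fst (trans V (E Test1) (tape w p) (P w h) (ow 0 0)), nat (int p + snd (trans V (E Test1) (tape w p) (P w h) (ow 0 0))), ow 0 0)])
  + pr1 x0 * acc_within V P w n (fst (trans V (E Test1) (tape w p) (P w h) (ow 0 1)))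
         (nat (int p + snd (trans V (E Test1) (tape w p) (P w h) (ow 0 1))))
         (update_regs V (E Test1) (tape w p) (P w h) (R4 x0 x1 x2 x3) (ow 0 1))
         (h @ [(fst (trans V (E Test1) (tape w p) (P w h) (ow 0 1)), nat (int p + snd (trans V (E Test1) (tape w p) (P w h) (ow 0 1))), ow 0 1)])"
    by (rule step_W) (use a in \<open>simp_all add: E_simps R4_def\<close>)
  also have "\<dots> = ?rhs" unfolding t unfolding assms upd_T1_stop by (simp add: acc_rej acc_rej[unfolded One_nat_def] E_simps)
  finally show ?thesis .
qed

lemma upd_T2_go: "c \<noteq> 0 \<Longrightarrow> update_regs V (E Test2) s c (R4 x0 x1 x2 x3) os = R4 x0 (x1 - real K) x2 x3"
  unfolding update_R4 act_E[OF dec_T2] by (simp add: act_v_def Let_def apply_aff R4_def idop_def)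
lemma upd_T2_stop: "update_regs V (E Test2) s 0 (R4 x0 x1 x2 x3) (ow 1 0) = R4 x0 0 x2 x3"
  unfolding update_R4 act_E[OF dec_T2] by (simp add: act_v_def Let_def apply_aff R4_def idop_def ow_def basis_mk)

lemma step_T2_go:
  assumes "P w h \<noteq> 0"
  shows "acc_within V P w (Suc n) (E Test2) p (R4 x0 x1 x2 x3) h =
   acc_within V P w n (E Test2) p (R4 x0 (x1 - real K) x2 x3) (h @ [(E Test2, p, onone)])"
  (is "_ = ?rhs")
proof -
  have a: "\<forall>r<4. act V (E Test2) (tape w p) (P w h) r \<noteq> Weigh"
    unfolding all4 act_E[OF dec_T2] using assms by (simp add: act_v_def Let_def idop_def)
  have t: "trans V (E Test2) (tape w p) (P w h) onone = (E Test2, 0)"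
    unfolding trans_E[OF dec_T2] using assms by (simp add: trans_v_def Let_def)
  have "acc_within V P w (Suc n) (E Test2) p (R4 x0 x1 x2 x3) h = acc_within V P w n (fst (trans V (E Test2) (tape w p) (P w h) onone))
         (nat (int p + snd (trans V (E Test2) (tape w p) (P w h) onone)))
         (update_regs V (E Test2) (tape w p) (P w h) (R4 x0 x1 x2 x3) onone)
         (h @ [(fst (trans V (E Test2) (tape w p) (P w h) onone), nat (int p + snd (trans V (E Test2) (tape w p) (P w h) onone)), onone)])"
    by (rule step_noW) (use a in \<open>simp_all add: E_simps\<close>)
  also have "\<dots> = ?rhs" unfolding t upd_T2_go[OF assms] by simp
  finally show ?thesis .
qed

lemma step_T2_stop:
  assumes "P w h = 0"
  shows "acc_within V P w (Suc n) (E Test2) p (R4 x0 x1 x2 x3) h =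
   pr0 x1 * acc_within V P w n (E GoR) p (R4 x0 0 x2 x3) (h @ [(E GoR, p, ow 1 0)])"
  (is "_ = ?rhs")
proof -
  have a: "act V (E Test2) (tape w p) (P w h) 1 = Weigh" "\<forall>r<4. r \<noteq> 1 \<longrightarrow> act V (E Test2) (tape w p) (P w h) r \<noteq> Weigh"
    unfolding all4 act_E[OF dec_T2] using assms by (simp_all add: act_v_def Let_def idop_def)
  have t: "trans V (E Test2) (tape w p) (P w h) (ow 1 0) = (E GoR, 0)"
     "trans V (E Test2) (tape w p) (P w h) (ow 1 1) = (E VRej, 0)"
    unfolding trans_E[OF dec_T2] using assms by (simp_all add: trans_v_def Let_def ow_def)
  have "acc_within V P w (Suc n) (E Test2) p (R4 x0 x1 x2 x3) h = 
    pr0 x1 * acc_within V P w n (fst (trans V (E Test2) (tape w p) (P w h) (ow 1 0)))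
         (nat (int p + snd (trans V (E Test2) (tape w p) (P w h) (ow 1 0))))
         (update_regs V (E Test2) (tape w p) (P w h) (R4 x0 x1 x2 x3) (ow 1 0))
         (h @ [(fst (trans V (E Test2) (tape w p) (P w h) (ow 1 0)), nat (int p + snd (trans V (E Test2) (tape w p) (P w h) (ow 1 0))), ow 1 0)])
  + pr1 x1 * acc_within V P w n (fst (trans V (E Test2) (tape w p) (P w h) (ow 1 1)))
         (nat (int p + snd (trans V (E Test2) (tape w p) (P w h) (ow 1 1))))
         (update_regs V (E Test2) (tape w p) (P w h) (R4 x0 x1 x2 x3) (ow 1 1))
         (h @ [(fst (trans V (E Test2) (tape w p) (P w h) (ow 1 1)), nat (int p + snd (trans V (E Test2) (tape w p) (P w h) (ow 1 1))), ow 1 1)])"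
    by (rule step_W) (use a in \<open>simp_all add: E_simps R4_def\<close>)
  also have "\<dots> = ?rhs" unfolding t unfolding assms upd_T2_stop by (simp add: acc_rej acc_rej[unfolded One_nat_def] E_simps)
  finally show ?thesis .
qed


lemma upd_Sim_acc: "update_regs V (E (Sim (tm_acc M))) s c (R4 x0 x1 x2 x3) (ow 3 0) = R4 x0 x1 x2 0"
  unfolding update_R4 act_E[OF dec_Sim[OF accrej(3)]] by (simp add: act_v_def Let_def apply_aff R4_def idop_def ow_def basis_mk)

lemma step_Sim_acc:
  "acc_within V P w (Suc n) (E (Sim (tm_acc M))) p (R4 x0 x1 x2 x3) h =
   pr0 x3 * acc_within V P w n (E GoR) p (R4 x0 x1 x2 0) (h @ [(E GoR, p, ow 3 0)]) + pr1 x3"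
  (is "_ = ?rhs")
proof -
  note d = dec_Sim[OF accrej(3)]
  have a: "act V (E (Sim (tm_acc M))) (tape w p) (P w h) 3 = Weigh" "\<forall>r<4. r \<noteq> 3 \<longrightarrow> act V (E (Sim (tm_acc M))) (tape w p) (P w h) r \<noteq> Weigh"
    unfolding all4 act_E[OF d] by (simp_all add: act_v_def Let_def idop_def)
  have t: "trans V (E (Sim (tm_acc M))) (tape w p) (P w h) (ow 3 0) = (E GoR, 0)"
     "trans V (E (Sim (tm_acc M))) (tape w p) (P w h) (ow 3 1) = (E VAcc, 0)"
    unfolding trans_E[OF d] by (simp_all add: trans_v_def Let_def ow_def)
  have "acc_within V P w (Suc n) (E (Sim (tm_acc M))) p (R4 x0 x1 x2 x3) h = 
    pr0 x3 * acc_within V P w n (fst (trans V (E (Sim (tm_acc M))) (tape w p) (P w h) (ow 3 0)))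
         (nat (int p + snd (trans V (E (Sim (tm_acc M))) (tape w p) (P w h) (ow 3 0))))
         (update_regs V (E (Sim (tm_acc M))) (tape w p) (P w h) (R4 x0 x1 x2 x3) (ow 3 0))
         (h @ [(fst (trans V (E (Sim (tm_acc M))) (tape w p) (P w h) (ow 3 0)), nat (int p + snd (trans V (E (Sim (tm_acc M))) (tape w p) (P w h) (ow 3 0))), ow 3 0)])
  + pr1 x3 * acc_within V P w n (fst (trans V (E (Sim (tm_acc M))) (tape w p) (P w h) (ow 3 1)))
         (nat (int p + snd (trans V (E (Sim (tm_acc M))) (tape w p) (P w h) (ow 3 1))))
         (update_regs V (E (Sim (tm_acc M))) (tape w p) (P w h) (R4 x0 x1 x2 x3) (ow 3 1))
         (h @ [(fst (trans V (E (Sim (tm_acc M))) (tape w p) (P w h) (ow 3 1)), nat (int p + snd (trans V (E (Sim (tm_acc M))) (tape w p) (P w h) (ow 3 1))), ow 3 1)])"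
    by (rule step_W) (use a in \<open>simp_all add: E_simps R4_def\<close>)
  also have "\<dots> = ?rhs" unfolding t unfolding upd_Sim_acc by (simp add: acc_acc E_simps)
  finally show ?thesis .
qed

lemma step_Sim_rej:
  "acc_within V P w (Suc n) (E (Sim (tm_rej M))) p (R4 x0 x1 x2 x3) h = 0"
proof -
  note d = dec_Sim[OF accrej(4)]
  have a: "\<forall>r<4. act V (E (Sim (tm_rej M))) (tape w p) (P w h) r \<noteq> Weigh"
    unfolding all4 act_E[OF d] using accrej(1) by (simp add: act_v_def Let_def idop_def)
  have t: "trans V (E (Sim (tm_rej M))) (tape w p) (P w h) onone = (E VRej, 0)"
    unfolding trans_E[OF d] using accrej(1) by (simp add: trans_v_def Let_def)
  have "acc_within V P w (Suc n) (E (Sim (tm_rej M))) p (R4 x0 x1 x2 x3) h = acc_within V P w n (fst (trans V (E (Sim (tm_rej M))) (tape w p) (P w h) onone))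
         (nat (int p + snd (trans V (E (Sim (tm_rej M))) (tape w p) (P w h) onone)))
         (update_regs V (E (Sim (tm_rej M))) (tape w p) (P w h) (R4 x0 x1 x2 x3) onone)
         (h @ [(fst (trans V (E (Sim (tm_rej M))) (tape w p) (P w h) onone), nat (int p + snd (trans V (E (Sim (tm_rej M))) (tape w p) (P w h) onone)), onone)])"
    by (rule step_noW) (use a in \<open>simp_all add: E_simps\<close>)
  also have "\<dots> = 0" unfolding t by (simp add: acc_rej acc_rej[unfolded One_nat_def] E_simps)
  finally show ?thesis .
qed

lemma upd_Sim0: "q \<noteq> tm_acc M \<Longrightarrow> q \<noteq> tm_rej M \<Longrightarrow> q < N \<Longrightarrow>
  update_regs V (E (Sim q)) s c (R4 x0 x1 x2 x3) (ow 2 0) = R4 (x0 - real (c mod K)) (x1 - real (c div K mod K)) 0 x3"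
  unfolding update_R4 act_E[OF dec_Sim] by (simp add: act_v_def Let_def apply_aff R4_def idop_def ow_def basis_mk)
lemma upd_Sim1: "q \<noteq> tm_acc M \<Longrightarrow> q \<noteq> tm_rej M \<Longrightarrow> q < N \<Longrightarrow>
  update_regs V (E (Sim q)) s c (R4 x0 x1 x2 x3) (ow 2 1) = R4 (x0 - real (c mod K)) (x1 - real (c div K mod K)) 1 x3"
  unfolding update_R4 act_E[OF dec_Sim] by (simp add: act_v_def Let_def apply_aff R4_def idop_def ow_def basis_mk)

lemma step_Sim:
  assumes q: "q \<noteq> tm_acc M" "q \<noteq> tm_rej M" "q < N"
  shows "acc_within V P w (Suc n) (E (Sim q)) p (R4 x0 x1 x2 x3) h =
   pr0 x2 * acc_within V P w n (E (Sim2 q (P w h mod K) (P w h div K mod K))) p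
      (R4 (x0 - real (P w h mod K)) (x1 - real (P w h div K mod K)) 0 x3)
      (h @ [(E (Sim2 q (P w h mod K) (P w h div K mod K)), p, ow 2 0)])
 + pr1 x2 * acc_within V P w n (E Test1) p
      (R4 (x0 - real (P w h mod K)) (x1 - real (P w h div K mod K)) 1 x3)
      (h @ [(E Test1, p, ow 2 1)])"
  (is "_ = ?rhs")
proof -
  note d = dec_Sim[OF q(3)]
  have a: "act V (E (Sim q)) (tape w p) (P w h) 2 = Weigh" "\<forall>r<4. r \<noteq> 2 \<longrightarrow> act V (E (Sim q)) (tape w p) (P w h) r \<noteq> Weigh"
    unfolding all4 act_E[OF d] using q by (simp_all add: act_v_def Let_def idop_def)
  have t: "trans V (E (Sim q)) (tape w p) (P w h) (ow 2 0) = (E (Sim2 q (P w h mod K) (P w h div K mod K)), 0)"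
     "trans V (E (Sim q)) (tape w p) (P w h) (ow 2 1) = (E Test1, 0)"
    unfolding trans_E[OF d] using q by (simp_all add: trans_v_def Let_def ow_def)
  have "acc_within V P w (Suc n) (E (Sim q)) p (R4 x0 x1 x2 x3) h = 
    pr0 x2 * acc_within V P w n (fst (trans V (E (Sim q)) (tape w p) (P w h) (ow 2 0)))
         (nat (int p + snd (trans V (E (Sim q)) (tape w p) (P w h) (ow 2 0))))
         (update_regs V (E (Sim q)) (tape w p) (P w h) (R4 x0 x1 x2 x3) (ow 2 0))
         (h @ [(fst (trans V (E (Sim q)) (tape w p) (P w h) (ow 2 0)), nat (int p + snd (trans V (E (Sim q)) (tape w p) (P w h) (ow 2 0))), ow 2 0)])
  + pr1 x2 * acc_within V P w n (fst (trans V (E (Sim q)) (tape w p) (P w h) (ow 2 1)))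
         (nat (int p + snd (trans V (E (Sim q)) (tape w p) (P w h) (ow 2 1))))
         (update_regs V (E (Sim q)) (tape w p) (P w h) (R4 x0 x1 x2 x3) (ow 2 1))
         (h @ [(fst (trans V (E (Sim q)) (tape w p) (P w h) (ow 2 1)), nat (int p + snd (trans V (E (Sim q)) (tape w p) (P w h) (ow 2 1))), ow 2 1)])"
    by (rule step_W) (use a in \<open>simp_all add: E_simps R4_def\<close>)
  also have "\<dots> = ?rhs" unfolding t unfolding upd_Sim0[OF q] upd_Sim1[OF q] by simp
  finally show ?thesis .
qed

definition f0 :: "int \<Rightarrow> nat \<Rightarrow> nat \<Rightarrow> real \<Rightarrow> real" where
  "f0 d s' b x = (if d = 0 then x + real s' else if d = 1 then x / real K else real K * x + (real K * real s' + real b))"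
definition f1 :: "int \<Rightarrow> nat \<Rightarrow> nat \<Rightarrow> real \<Rightarrow> real" where
  "f1 d s' b x = (if d = 0 then x + real b else if d = 1 then real K * x + (real K * real b + real s') else x / real K)"

lemma upd_Sim2:
  assumes "a < K" "b < K" "tm_delta M q a = (q', s', d)" "q' < N" "d \<in> {-1,0,1}"
  shows "update_regs V (E (Sim2 q a b)) s c (R4 x0 x1 x2 x3) os = R4 (f0 d s' b x0) (f1 d s' b x1) (1/2) x3"
  unfolding update_R4 act_E[OF dec_Sim2[OF assms(1,2)]] using assms(3-5)
  by (auto simp: act_v_def Let_def apply_aff R4_def idop_def f0_def f1_def)

lemma step_Sim2:
  assumes ab: "a < K" "b < K" and dl: "tm_delta M q a = (q', s', d)" "q' < N" "d \<in> {-1,0,1}"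
  shows "acc_within V P w (Suc n) (E (Sim2 q a b)) p (R4 x0 x1 x2 x3) h =
   acc_within V P w n (E (Sim q')) p (R4 (f0 d s' b x0) (f1 d s' b x1) (1/2) x3) (h @ [(E (Sim q'), p, onone)])"
  (is "_ = ?rhs")
proof -
  note dd = dec_Sim2[OF ab]
  have a: "\<forall>r<4. act V (E (Sim2 q a b)) (tape w p) (P w h) r \<noteq> Weigh"
    unfolding all4 act_E[OF dd] using dl by (simp add: act_v_def Let_def idop_def)
  have t: "trans V (E (Sim2 q a b)) (tape w p) (P w h) onone = (E (Sim q'), 0)"
    unfolding trans_E[OF dd] using dl by (simp add: trans_v_def Let_def)
  have "acc_within V P w (Suc n) (E (Sim2 q a b)) p (R4 x0 x1 x2 x3) h = acc_within V P w n (fst (trans V (E (Sim2 q a b)) (tape w p) (P w h) onone))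
         (nat (int p + snd (trans V (E (Sim2 q a b)) (tape w p) (P w h) onone)))
         (update_regs V (E (Sim2 q a b)) (tape w p) (P w h) (R4 x0 x1 x2 x3) onone)
         (h @ [(fst (trans V (E (Sim2 q a b)) (tape w p) (P w h) onone), nat (int p + snd (trans V (E (Sim2 q a b)) (tape w p) (P w h) onone)), onone)])"
    by (rule step_noW) (use a in \<open>simp_all add: E_simps\<close>)
  also have "\<dots> = ?rhs" unfolding t unfolding upd_Sim2[OF ab dl] by simp
  finally show ?thesis .
qed

lemma step_Sim2_bad:
  assumes ab: "a < K" "b < K" and dl: "tm_delta M q a = (q', s', d)" "\<not> (q' < N \<and> d \<in> {-1,0,1})"
  shows "acc_within V P w (Suc n) (E (Sim2 q a b)) p (R4 x0 x1 x2 x3) h = 0"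
proof -
  note dd = dec_Sim2[OF ab]
  have a: "\<forall>r<4. act V (E (Sim2 q a b)) (tape w p) (P w h) r \<noteq> Weigh"
    unfolding all4 act_E[OF dd] using dl by (simp add: act_v_def Let_def idop_def)
  have t: "trans V (E (Sim2 q a b)) (tape w p) (P w h) onone = (E VRej, 0)"
    unfolding trans_E[OF dd] using dl by (auto simp add: trans_v_def Let_def)
  have "acc_within V P w (Suc n) (E (Sim2 q a b)) p (R4 x0 x1 x2 x3) h = acc_within V P w n (fst (trans V (E (Sim2 q a b)) (tape w p) (P w h) onone))
         (nat (int p + snd (trans V (E (Sim2 q a b)) (tape w p) (P w h) onone)))
         (update_regs V (E (Sim2 q a b)) (tape w p) (P w h) (R4 x0 x1 x2 x3) onone)
         (h @ [(fst (trans V (E (Sim2 q a b)) (tape w p) (P w h) onone), nat (int p + snd (trans V (E (Sim2 q a b)) (tape w p) (P w h) onone)), onone)])"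
    by (rule step_noW) (use a in \<open>simp_all add: E_simps\<close>)
  also have "\<dots> = 0" unfolding t by (simp add: acc_rej acc_rej[unfolded One_nat_def] E_simps)
  finally show ?thesis .
qed

end


definition fsupp :: "(int \<Rightarrow> nat) \<Rightarrow> bool" where "fsupp tp \<longleftrightarrow> finite {j. tp j \<noteq> 0}"

definition encR :: "nat \<Rightarrow> (int \<Rightarrow> nat) \<Rightarrow> int \<Rightarrow> real" where
  "encR k tp h = (\<Sum>i. real (tp (h + int i)) * real k ^ i)"
definition encL :: "nat \<Rightarrow> (int \<Rightarrow> nat) \<Rightarrow> int \<Rightarrow> real" where
  "encL k tp h = (\<Sum>i. real (tp (h - 1 - int i)) * real k ^ i)"

lemma fin_shift: "fsupp tp \<Longrightarrow> finite {i::nat. tp (h + int i) \<noteq> 0}"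
proof -
  assume f: "fsupp tp"
  have "{i::nat. tp (h + int i) \<noteq> 0} = (\<lambda>i. h + int i) -` {j. tp j \<noteq> 0}" by auto
  moreover have "inj (\<lambda>i::nat. h + int i)" by (auto simp: inj_def)
  ultimately show ?thesis using f unfolding fsupp_def by (metis finite_vimageI)
qed

lemma fin_shiftL: "fsupp tp \<Longrightarrow> finite {i::nat. tp (h - 1 - int i) \<noteq> 0}"
proof -
  assume f: "fsupp tp"
  have "{i::nat. tp (h - 1 - int i) \<noteq> 0} = (\<lambda>i. h - 1 - int i) -` {j. tp j \<noteq> 0}" by auto
  moreover have "inj (\<lambda>i::nat. h - 1 - int i)" by (auto simp: inj_def)
  ultimately show ?thesis using f unfolding fsupp_def by (metis finite_vimageI)
qed

lemma summR: "fsupp tp \<Longrightarrow> summable (\<lambda>i. real (tp (h + int i)) * real k ^ i)"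
  by (rule summable_finite[OF fin_shift[of tp h]]) auto
lemma summL: "fsupp tp \<Longrightarrow> summable (\<lambda>i. real (tp (h - 1 - int i)) * real k ^ i)"
  by (rule summable_finite[OF fin_shiftL[of tp h]]) auto

lemma encR_rec: assumes "fsupp tp" shows "encR k tp h = real (tp h) + real k * encR k tp (h + 1)"
proof -
  let ?f = "\<lambda>i. real (tp (h + int i)) * real k ^ i"
  let ?g = "\<lambda>i. real (tp (h + 1 + int i)) * real k ^ i"
  have s: "summable ?f" using summR[OF assms] .
  have sg: "summable ?g" using summR[OF assms, of "h+1"] .
  have "(\<Sum>n. ?f (Suc n)) = suminf ?f - ?f 0" by (rule suminf_split_head[OF s])
  moreover have "(\<lambda>n. ?f (Suc n)) = (\<lambda>n. real k * ?g n)" by (auto simp: algebra_simps)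
  moreover have "(\<Sum>n. real k * ?g n) = real k * suminf ?g" by (rule suminf_mult[OF sg])
  ultimately show ?thesis unfolding encR_def by simp
qed

lemma encL_rec: assumes "fsupp tp" shows "encL k tp (h + 1) = real (tp h) + real k * encL k tp h"
proof -
  let ?f = "\<lambda>i. real (tp (h + 1 - 1 - int i)) * real k ^ i"
  let ?g = "\<lambda>i. real (tp (h - 1 - int i)) * real k ^ i"
  have s: "summable ?f" using summL[OF assms, of "h+1"] .
  have sg: "summable ?g" using summL[OF assms] .
  have "(\<Sum>n. ?f (Suc n)) = suminf ?f - ?f 0" by (rule suminf_split_head[OF s])
  moreover have "(\<lambda>n. ?f (Suc n)) = (\<lambda>n. real k * ?g n)" by (auto simp: algebra_simps)
  moreover have "(\<Sum>n. real k * ?g n) = real k * suminf ?g" by (rule suminf_mult[OF sg])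
  ultimately show ?thesis unfolding encL_def by simp
qed

lemma encR_local: "(\<And>j. j \<ge> h \<Longrightarrow> tp j = tp' j) \<Longrightarrow> encR k tp h = encR k tp' h"
  unfolding encR_def by (rule arg_cong[where f=suminf]) auto
lemma encL_local: "(\<And>j. j < h \<Longrightarrow> tp j = tp' j) \<Longrightarrow> encL k tp h = encL k tp' h"
  unfolding encL_def by (rule arg_cong[where f=suminf]) auto

lemma encR_nat: assumes "fsupp tp" shows "\<exists>m::nat. encR k tp h = real m"
proof -
  have "encR k tp h = (\<Sum>i\<in>{i. tp (h + int i) \<noteq> 0}. real (tp (h + int i)) * real k ^ i)"
    unfolding encR_def by (rule suminf_finite[OF fin_shift[OF assms]]) auto
  also have "\<dots> = real (\<Sum>i\<in>{i. tp (h + int i) \<noteq> 0}. tp (h + int i) * k ^ i)" by simp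
  finally show ?thesis by blast
qed
lemma encL_nat: assumes "fsupp tp" shows "\<exists>m::nat. encL k tp h = real m"
proof -
  have "encL k tp h = (\<Sum>i\<in>{i. tp (h - 1 - int i) \<noteq> 0}. real (tp (h - 1 - int i)) * real k ^ i)"
    unfolding encL_def by (rule suminf_finite[OF fin_shiftL[OF assms]]) auto
  also have "\<dots> = real (\<Sum>i\<in>{i. tp (h - 1 - int i) \<noteq> 0}. tp (h - 1 - int i) * k ^ i)" by simp
  finally show ?thesis by blast
qed

lemma encR_zero: "(\<And>j. j \<ge> h \<Longrightarrow> tp j = 0) \<Longrightarrow> encR k tp h = 0"
  unfolding encR_def by simp
lemma encL_zero: "(\<And>j. j < h \<Longrightarrow> tp j = 0) \<Longrightarrow> encL k tp h = 0"
  unfolding encL_def by simp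

lemma fsupp_upd: "fsupp tp \<Longrightarrow> fsupp (tp(h := s))"
proof -
  assume "fsupp tp"
  moreover have "{j. (tp(h := s)) j \<noteq> 0} \<subseteq> insert h {j. tp j \<noteq> 0}" by auto
  ultimately show ?thesis unfolding fsupp_def by (meson finite_insert finite_subset)
qed

definition cfg :: "'a tm \<Rightarrow> 'a list \<Rightarrow> nat \<Rightarrow> tm_config" where
  "cfg M w t = (tm_step M ^^ t) (tm_init M w)"

definition wfc :: "'a tm \<Rightarrow> tm_config \<Rightarrow> bool" where
  "wfc M c \<longleftrightarrow> fst c < tm_nst M \<and> (\<forall>j. snd (snd c) j < tm_nsym M) \<and> fsupp (snd (snd c))"

lemma cfg_Suc: "cfg M w (Suc t) = tm_step M (cfg M w t)"
  by (simp add: cfg_def)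

lemma wfc_init: "wf_tm M \<Longrightarrow> wfc M (tm_init M w)"
proof -
  assume wf: "wf_tm M"
  have "{j. (if 0 \<le> j \<and> j < int (length w) then tm_enc M (w ! nat j) else 0) \<noteq> 0} \<subseteq> {0..<int (length w)}"
    by auto
  then have "fsupp (\<lambda>j. if 0 \<le> j \<and> j < int (length w) then tm_enc M (w ! nat j) else 0)"
    unfolding fsupp_def by (meson finite_atLeastLessThan_int finite_subset)
  then show ?thesis using wf by (auto simp: wfc_def tm_init_def wf_tm_def)
qed

lemma wfc_step: "wf_tm M \<Longrightarrow> wfc M c \<Longrightarrow> wfc M (tm_step M c)"
proof -
  assume wf: "wf_tm M" and c: "wfc M c"
  obtain q h tp where cc: "c = (q, h, tp)" by (cases c) auto
  show ?thesis
  proof (cases "q = tm_acc M \<or> q = tm_rej M")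
    case True then show ?thesis using c cc by (simp add: tm_step_def)
  next
    case False
    obtain q' s' d where dd: "tm_delta M q (tp h) = (q', s', d)" by (cases "tm_delta M q (tp h)") auto
    have "q < tm_nst M" "tp h < tm_nsym M" using c cc by (auto simp: wfc_def)
    then have "q' < tm_nst M" "s' < tm_nsym M" using wf dd unfolding wf_tm_def by (metis fst_conv snd_conv)+
    then show ?thesis using False c cc dd fsupp_upd by (auto simp: tm_step_def wfc_def)
  qed
qed

lemma wfc_cfg: "wf_tm M \<Longrightarrow> wfc M (cfg M w t)"
  by (induction t) (simp_all add: cfg_def wfc_init wfc_step)

lemma rej_stays: "fst (cfg M w t) = tm_rej M \<Longrightarrow> fst (cfg M w (t + m)) = tm_rej M"
proof (induction m)
  case 0 then show ?case by simp
next
  case (Suc m)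
  then have "fst (cfg M w (t + m)) = tm_rej M" by simp
  then show ?case by (cases "cfg M w (t + m)") (simp add: cfg_Suc[of M w "t+m", simplified] tm_step_def)
qed


definition bad :: "nat \<Rightarrow> real \<Rightarrow> bool" where
  "bad k x \<longleftrightarrow> (\<exists>d z::int. 0 < \<bar>d\<bar> \<and> \<bar>d\<bar> < int k \<and> x = real_of_int d + real k * real_of_int z)"

lemma bad_sub: "bad k x \<Longrightarrow> bad k (x - real k)"
proof -
  assume "bad k x"
  then obtain d z where "0 < \<bar>d\<bar>" "\<bar>d\<bar> < int k" "x = real_of_int d + real k * real_of_int z" unfolding bad_def by blast
  then show ?thesis unfolding bad_def
    by (intro exI[of _ d] exI[of _ "z - 1"]) (auto simp: algebra_simps)
qed

lemma bad_int: "bad k x \<Longrightarrow> \<exists>m::int. x = real_of_int m \<and> m \<noteq> 0"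
proof -
  assume "bad k x"
  then obtain d z where dz: "0 < \<bar>d\<bar>" "\<bar>d\<bar> < int k" "x = real_of_int d + real k * real_of_int z" unfolding bad_def by blast
  have "d + int k * z \<noteq> 0"
  proof
    assume h: "d + int k * z = 0"
    then have "z \<noteq> 0" using dz by auto
    then have "\<bar>int k * z\<bar> \<ge> int k" by (simp add: abs_mult mult_le_cancel_left1 del: of_nat_0_le_iff) (smt (verit) of_nat_0_le_iff)
    then show False using h dz by linarith
  qed
  then show ?thesis using dz by (intro exI[of _ "d + int k * z"]) simp
qed

lemma pr0_int: "m \<noteq> 0 \<Longrightarrow> pr0 (real_of_int m) \<le> 2/3"
proof -
  assume m: "m \<noteq> 0"
  show ?thesis
  proof (cases "m > 0")
    case True
    then have "real_of_int m \<ge> 1" by simp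
    then show ?thesis unfolding pr0_def by (simp add: field_simps)
  next
    case False
    then have "real_of_int m \<le> -1" using m by simp
    then show ?thesis unfolding pr0_def by (simp add: field_simps)
  qed
qed

lemma bad_pr0: "bad k x \<Longrightarrow> pr0 x \<le> 2/3"
  using bad_int pr0_int by blast

lemma bad_claim:
  assumes "a < k" "v < k" "a \<noteq> v" "Y = real m"
  shows "bad k (real v + real k * Y - real a)"
  unfolding bad_def using assms
  by (intro exI[of _ "int v - int a"] exI[of _ "int m"]) auto

context vs begin

lemma sim_step:
  assumes c: "wfc M (q, h, tp)" and q: "q \<noteq> tm_acc M" "q \<noteq> tm_rej M"
    and dd: "tm_delta M q (tp h) = (q', s', d)"
  shows "q' < N" "d \<in> {-1,0,1}" "tm_step M (q, h, tp) = (q', h + d, tp(h := s'))"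
    "f0 d s' (tp (h-1)) (encR K tp h - real (tp h)) = encR K (tp(h := s')) (h + d)"
    "f1 d s' (tp (h-1)) (encL K tp h - real (tp (h-1))) = encL K (tp(h := s')) (h + d)"
proof -
  have qn: "q < N" and th: "tp h < tm_nsym M" and fs: "fsupp tp" using c by (auto simp: wfc_def)
  show "q' < N" "d \<in> {-1,0,1}" using wf qn th dd unfolding wf_tm_def by (metis fst_conv snd_conv)+
  show "tm_step M (q, h, tp) = (q', h + d, tp(h := s'))" using q dd by (simp add: tm_step_def)
  have dc: "d = 0 \<or> d = 1 \<or> d = -1" using \<open>d \<in> {-1,0,1}\<close> by auto
  let ?t = "tp(h := s')"
  have fs': "fsupp ?t" using fs by (rule fsupp_upd)
  have Rh: "encR K tp h = real (tp h) + real K * encR K tp (h+1)" by (rule encR_rec[OF fs])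
  have Lh: "encL K tp h = real (tp (h-1)) + real K * encL K tp (h-1)" using encL_rec[OF fs, of K "h-1"] by simp
  have R1: "encR K ?t (h+1) = encR K tp (h+1)" by (rule encR_local) auto
  have L0: "encL K ?t h = encL K tp h" by (rule encL_local) auto
  have Lm: "encL K ?t (h-1) = encL K tp (h-1)" by (rule encL_local) auto
  have Rt: "encR K ?t h = real s' + real K * encR K ?t (h+1)" using encR_rec[OF fs', of K h] by simp
  have Lt: "encL K ?t (h+1) = real s' + real K * encL K ?t h" using encL_rec[OF fs', of K h] by simp
  have Rtm: "encR K ?t (h-1) = real (tp (h-1)) + real K * encR K ?t h" using encR_rec[OF fs', of K "h-1"] by simp
  have Kp: "real K > 0" using K0 by simp
  show "f0 d s' (tp (h-1)) (encR K tp h - real (tp h)) = encR K ?t (h + d)"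
    using dc Rh R1 Rt Rtm Kp by (auto simp: f0_def algebra_simps)
  show "f1 d s' (tp (h-1)) (encL K tp h - real (tp (h-1))) = encL K ?t (h + d)"
    using dc Lh L0 Lm Lt Kp by (auto simp: f1_def algebra_simps)
qed

end


context vs begin

lemma acc0: "acc_within V P w 0 q p regs h = (if q = 0 then 1 else 0)"
  by (simp add: VV_def)

lemma E_nz: "X \<noteq> VAcc \<Longrightarrow> E X \<noteq> 0" using E_ne(1) by blast

lemma mult_le_eps: "0 \<le> u \<Longrightarrow> u \<le> c \<Longrightarrow> A \<le> B \<Longrightarrow> 0 \<le> B \<Longrightarrow> u * A \<le> c * (B::real)"
  by (meson mult_le_cancel_left_pos mult_left_mono mult_mono order.trans order_le_less)

definition t0 :: "'a list \<Rightarrow> int \<Rightarrow> nat" where "t0 w = snd (snd (tm_init M w))"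

lemma t0_eq: "t0 w j = (if 0 \<le> j \<and> j < int (length w) then tm_enc M (w ! nat j) else 0)"
  by (simp add: t0_def tm_init_def)

lemma cfg0: "cfg M w 0 = (tm_start M, 0, t0 w)" by (simp add: cfg_def t0_def tm_init_def)

lemma tape_cases: "p \<le> length w + 1 \<Longrightarrow> tape w p = REnd \<longleftrightarrow> p = length w + 1"
  by (auto simp: tape_def)


lemma sound_main:
  assumes e0: "0 < e" and e1: "e < 1/2" and na: "\<not> tm_accepts M w"
  defines "eps \<equiv> (of_rat e :: real)"
  shows "(\<forall>p x0 x1 x2 x3 h. p \<le> length w + 1 \<longrightarrow> acc_within V P w n (E GoR) p (R4 x0 x1 x2 x3) h \<le> eps) \<and>
    (\<forall>p h. p \<le> length w \<longrightarrow> acc_within V P w n (E Load) p (R4 (encR K (t0 w) (int p)) 0 (1/2) al) h \<le> eps) \<and>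
    (\<forall>t qT hh tp h. cfg M w t = (qT, hh, tp) \<longrightarrow>
        acc_within V P w n (E (Sim qT)) 0 (R4 (encR K tp hh) (encL K tp hh) (1/2) al) h \<le> eps) \<and>
    (\<forall>t qT hh tp x2 h. cfg M w t = (qT, hh, tp) \<longrightarrow> qT \<noteq> tm_acc M \<longrightarrow> qT \<noteq> tm_rej M \<longrightarrow>
        acc_within V P w n (E (Sim2 qT (tp hh) (tp (hh - 1)))) 0
          (R4 (encR K tp hh - real (tp hh)) (encL K tp hh - real (tp (hh - 1))) x2 al) h \<le> eps) \<and>
    (\<forall>x0 x1 x2 x3 h. acc_within V P w n (E Test1) 0 (R4 x0 x1 x2 x3) h \<le> eps) \<and>
    (\<forall>x0 x1 x2 x3 h. acc_within V P w n (E Test2) 0 (R4 x0 x1 x2 x3) h \<le> eps) \<and>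
    (\<forall>x0 x1 x2 x3 h. bad K x0 \<or> bad K x1 \<longrightarrow> acc_within V P w n (E Test1) 0 (R4 x0 x1 x2 x3) h \<le> 2/3 * eps) \<and>
    (\<forall>x0 x1 x2 x3 h. bad K x1 \<longrightarrow> acc_within V P w n (E Test2) 0 (R4 x0 x1 x2 x3) h \<le> 2/3 * eps) \<and>
    (\<forall>qT x0 x1 x2 h. qT < N \<longrightarrow> acc_within V P w n (E (Sim qT)) 0 (R4 x0 x1 x2 al) h \<le> 4/3 * eps) \<and>
    (\<forall>qT a b x0 x1 x2 h. a < K \<longrightarrow> b < K \<longrightarrow> acc_within V P w n (E (Sim2 qT a b)) 0 (R4 x0 x1 x2 al) h \<le> 4/3 * eps)"
proof (induction n)
  case 0
  have ep: "eps \<ge> 0" using e0 by (simp add: eps_def)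
  show ?case using ep by (simp add: acc0 E_simps del: acc_within.simps)
next
  case (Suc n)
  have ep: "eps > 0" using e0 by (simp add: eps_def)
  have al: "al = eps / 3" by (simp add: eps_def of_rat_divide)
  have al01: "0 \<le> al" "al \<le> 1" using al ep e1 by (simp_all add: eps_def of_rat_less[symmetric])
  have I_GoR: "\<And>p x0 x1 x2 x3 h. p \<le> length w + 1 \<Longrightarrow> acc_within V P w n (E GoR) p (R4 x0 x1 x2 x3) h \<le> eps"
    using Suc.IH[THEN conjunct1] by blast
  have I_Load: "\<And>p h. p \<le> length w \<Longrightarrow> acc_within V P w n (E Load) p (R4 (encR K (t0 w) (int p)) 0 (1/2) al) h \<le> eps"
    using Suc.IH[THEN conjunct2, THEN conjunct1] by blast
  have I_SimH: "\<And>t qT hh tp h. cfg M w t = (qT, hh, tp) \<Longrightarrow>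
        acc_within V P w n (E (Sim qT)) 0 (R4 (encR K tp hh) (encL K tp hh) (1/2) al) h \<le> eps"
    using Suc.IH[THEN conjunct2, THEN conjunct2, THEN conjunct1] by blast
  have I_Sim2H: "\<And>t qT hh tp x2 h. cfg M w t = (qT, hh, tp) \<Longrightarrow> qT \<noteq> tm_acc M \<Longrightarrow> qT \<noteq> tm_rej M \<Longrightarrow>
        acc_within V P w n (E (Sim2 qT (tp hh) (tp (hh - 1)))) 0
          (R4 (encR K tp hh - real (tp hh)) (encL K tp hh - real (tp (hh - 1))) x2 al) h \<le> eps"
    using Suc.IH[THEN conjunct2, THEN conjunct2, THEN conjunct2, THEN conjunct1] by blast
  have I_T1: "\<And>x0 x1 x2 x3 h. acc_within V P w n (E Test1) 0 (R4 x0 x1 x2 x3) h \<le> eps"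
    using Suc.IH[THEN conjunct2, THEN conjunct2, THEN conjunct2, THEN conjunct2, THEN conjunct1] by blast
  have I_T2: "\<And>x0 x1 x2 x3 h. acc_within V P w n (E Test2) 0 (R4 x0 x1 x2 x3) h \<le> eps"
    using Suc.IH[THEN conjunct2, THEN conjunct2, THEN conjunct2, THEN conjunct2, THEN conjunct2, THEN conjunct1] by blast
  have I_T1b: "\<And>x0 x1 x2 x3 h. bad K x0 \<or> bad K x1 \<Longrightarrow> acc_within V P w n (E Test1) 0 (R4 x0 x1 x2 x3) h \<le> 2/3 * eps"
    using Suc.IH[THEN conjunct2, THEN conjunct2, THEN conjunct2, THEN conjunct2, THEN conjunct2, THEN conjunct2, THEN conjunct1] by blast
  have I_T2b: "\<And>x0 x1 x2 x3 h. bad K x1 \<Longrightarrow> acc_within V P w n (E Test2) 0 (R4 x0 x1 x2 x3) h \<le> 2/3 * eps"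
    using Suc.IH[THEN conjunct2, THEN conjunct2, THEN conjunct2, THEN conjunct2, THEN conjunct2, THEN conjunct2, THEN conjunct2, THEN conjunct1] by blast
  have I_SimL: "\<And>qT x0 x1 x2 h. qT < N \<Longrightarrow> acc_within V P w n (E (Sim qT)) 0 (R4 x0 x1 x2 al) h \<le> 4/3 * eps"
    using Suc.IH[THEN conjunct2, THEN conjunct2, THEN conjunct2, THEN conjunct2, THEN conjunct2, THEN conjunct2, THEN conjunct2, THEN conjunct2, THEN conjunct1] by blast
  have I_Sim2L: "\<And>qT a b x0 x1 x2 h. a < K \<Longrightarrow> b < K \<Longrightarrow> acc_within V P w n (E (Sim2 qT a b)) 0 (R4 x0 x1 x2 al) h \<le> 4/3 * eps"
    using Suc.IH[THEN conjunct2, THEN conjunct2, THEN conjunct2, THEN conjunct2, THEN conjunct2, THEN conjunct2, THEN conjunct2, THEN conjunct2, THEN conjunct2] by blast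
  note nn = acc_nonneg
  have G: "acc_within V P w (Suc n) (E GoR) p (R4 x0 x1 x2 x3) h \<le> eps" if p: "p \<le> length w + 1" for p x0 x1 x2 x3 h
  proof (cases "tape w p = REnd")
    case True
    then have pl: "p = length w + 1" using tape_cases[OF p] by simp
    have z: "encR K (t0 w) (int (length w)) = 0" by (rule encR_zero) (simp add: t0_eq)
    show ?thesis unfolding step_GoR using True pl I_Load[of "length w"] z by simp
  next
    case False
    then have "Suc p \<le> length w + 1" using p tape_cases[OF p] by simp
    then show ?thesis unfolding step_GoR using False I_GoR by simp
  qed
  have L: "acc_within V P w (Suc n) (E Load) p (R4 (encR K (t0 w) (int p)) 0 (1/2) al) h \<le> eps"
    if p: "p \<le> length w" for p h
  proof (cases "p = 0")
    case True
    then have tl: "tape w p = LEnd" by (simp add: tape_def)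
    have z: "encL K (t0 w) 0 = 0" by (rule encL_zero) (simp add: t0_eq)
    show ?thesis unfolding step_Load_L[OF tl] using I_SimH[OF cfg0] z True by simp
  next
    case False
    then have ts: "tape w p = Sym (w ! (p - 1))" using p by (simp add: tape_def)
    have fs: "fsupp (t0 w)" using wfc_cfg[OF wf, of w 0] by (simp add: cfg0 wfc_def)
    have "encR K (t0 w) (int (p - 1)) = real (t0 w (int (p-1))) + real K * encR K (t0 w) (int (p - 1) + 1)"
      by (rule encR_rec[OF fs])
    also have "int (p - 1) + 1 = int p" using False by simp
    also have "t0 w (int (p-1)) = tm_enc M (w ! (p - 1))" using False p by (simp add: t0_eq of_nat_diff nat_diff_distrib)
    finally have r: "real K * encR K (t0 w) (int p) + real (tm_enc M (w ! (p - 1))) = encR K (t0 w) (int (p - 1))"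
      by simp
    show ?thesis unfolding step_Load[OF ts] r using I_Load[of "p - 1"] p by simp
  qed
  have T1: "acc_within V P w (Suc n) (E Test1) 0 (R4 x0 x1 x2 x3) h \<le> eps" for x0 x1 x2 x3 h
  proof (cases "P w h = 0")
    case True
    show ?thesis unfolding step_T1_stop[where P=P and w=w and h=h, OF True]
      using mult_le_eps[OF pr_nonneg(1) pr_le1(1) I_T2] ep by simp
  next
    case False show ?thesis unfolding step_T1_go[where P=P and w=w and h=h, OF False] using I_T1 .
  qed
  have T2: "acc_within V P w (Suc n) (E Test2) 0 (R4 x0 x1 x2 x3) h \<le> eps" for x0 x1 x2 x3 h
  proof (cases "P w h = 0")
    case True
    show ?thesis unfolding step_T2_stop[where P=P and w=w and h=h, OF True]
      using mult_le_eps[OF pr_nonneg(1) pr_le1(1) I_GoR[of 0]] ep by simp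
  next
    case False show ?thesis unfolding step_T2_go[where P=P and w=w and h=h, OF False] using I_T2 .
  qed
  have T1b: "acc_within V P w (Suc n) (E Test1) 0 (R4 x0 x1 x2 x3) h \<le> 2/3 * eps" if b: "bad K x0 \<or> bad K x1" for x0 x1 x2 x3 h
  proof (cases "P w h = 0")
    case True
    show ?thesis
    proof (cases "bad K x0")
      case True
      show ?thesis unfolding step_T1_stop[where P=P and w=w and h=h, OF \<open>P w h = 0\<close>]
        using mult_le_eps[OF pr_nonneg(1) bad_pr0[OF True] I_T2] ep by simp
    next
      case False
      then have "bad K x1" using b by simp
      then show ?thesis unfolding step_T1_stop[where P=P and w=w and h=h, OF \<open>P w h = 0\<close>]
        using mult_le_eps[OF pr_nonneg(1) pr_le1(1) I_T2b] ep by simp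
    qed
  next
    case False
    have "bad K (x0 - real K) \<or> bad K x1" using b bad_sub by blast
    then show ?thesis unfolding step_T1_go[where P=P and w=w and h=h, OF False] by (rule I_T1b)
  qed
  have T2b: "acc_within V P w (Suc n) (E Test2) 0 (R4 x0 x1 x2 x3) h \<le> 2/3 * eps" if b: "bad K x1" for x0 x1 x2 x3 h
  proof (cases "P w h = 0")
    case True
    show ?thesis unfolding step_T2_stop[where P=P and w=w and h=h, OF True]
      using mult_le_eps[OF pr_nonneg(1) bad_pr0[OF b] I_GoR[of 0]] ep by simp
  next
    case False
    show ?thesis unfolding step_T2_go[where P=P and w=w and h=h, OF False] by (rule I_T2b[OF bad_sub[OF b]])
  qed
  have SL: "acc_within V P w (Suc n) (E (Sim qT)) 0 (R4 x0 x1 x2 al) h \<le> 4/3 * eps" if q: "qT < N" for qT x0 x1 x2 h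
  proof -
    consider "qT = tm_acc M" | "qT = tm_rej M" | "qT \<noteq> tm_acc M \<and> qT \<noteq> tm_rej M" by blast
    then show ?thesis
    proof cases
      case 1
      let ?G = "acc_within V P w n (E GoR) 0 (R4 x0 x1 x2 0) (h @ [(E GoR, 0, ow 3 0)])"
      have g: "?G \<le> eps" by (rule I_GoR) simp
      have pa: "pr0 al = 1 - al" "pr1 al = al" using pr_prob[OF al01] by auto
      have "pr0 al * ?G + pr1 al \<le> (1 - al) * eps + al"
        unfolding pa using g al01 by (intro add_mono mult_left_mono) auto
      also have "(1 - al) * eps + al = 4/3 * eps - eps * eps / 3" by (simp add: al algebra_simps)
      also have "\<dots> \<le> 4/3 * eps" by simp
      finally show ?thesis using 1 step_Sim_acc by simp
    next
      case 2 then show ?thesis using step_Sim_rej ep by simp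
    next
      case 3
      let ?c = "P w h"
      have A: "acc_within V P w n (E (Sim2 qT (?c mod K) (?c div K mod K))) 0
          (R4 (x0 - real (?c mod K)) (x1 - real (?c div K mod K)) 0 al) (h @ [(E (Sim2 qT (?c mod K) (?c div K mod K)), 0, ow 2 0)]) \<le> 4/3 * eps"
        using I_Sim2L K0 by simp
      have B: "acc_within V P w n (E Test1) 0 (R4 (x0 - real (?c mod K)) (x1 - real (?c div K mod K)) 1 al) (h @ [(E Test1, 0, ow 2 1)]) \<le> 4/3 * eps"
      proof -
        have "acc_within V P w n (E Test1) 0 (R4 (x0 - real (?c mod K)) (x1 - real (?c div K mod K)) 1 al) (h @ [(E Test1, 0, ow 2 1)]) \<le> eps"
          by (rule I_T1)
        then show ?thesis using ep by simp
      qed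
      have "pr0 x2 * acc_within V P w n (E (Sim2 qT (?c mod K) (?c div K mod K))) 0
          (R4 (x0 - real (?c mod K)) (x1 - real (?c div K mod K)) 0 al) (h @ [(E (Sim2 qT (?c mod K) (?c div K mod K)), 0, ow 2 0)])
        + pr1 x2 * acc_within V P w n (E Test1) 0 (R4 (x0 - real (?c mod K)) (x1 - real (?c div K mod K)) 1 al) (h @ [(E Test1, 0, ow 2 1)])
        \<le> pr0 x2 * (4/3 * eps) + pr1 x2 * (4/3 * eps)"
        using A B pr_nonneg by (intro add_mono mult_left_mono) auto
      also have "\<dots> = 4/3 * eps" by (simp only: distrib_right[symmetric] pr_sum mult_1)
      finally show ?thesis using step_Sim[of qT, OF _ _ q] 3 by simp
    qed
  qed
  have S2L: "acc_within V P w (Suc n) (E (Sim2 qT a b)) 0 (R4 x0 x1 x2 al) h \<le> 4/3 * eps" if ab: "a < K" "b < K" for qT a b x0 x1 x2 h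
  proof -
    obtain q' s' d where dd: "tm_delta M qT a = (q', s', d)" by (cases "tm_delta M qT a") auto
    show ?thesis
    proof (cases "q' < N \<and> d \<in> {-1,0,1}")
      case True
      then show ?thesis unfolding step_Sim2[OF ab dd True[THEN conjunct1] True[THEN conjunct2]] using I_SimL True by blast
    next
      case False
      then show ?thesis unfolding step_Sim2_bad[OF ab dd False] using ep by simp
    qed
  qed
  have S2H: "acc_within V P w (Suc n) (E (Sim2 qT (tp hh) (tp (hh - 1)))) 0
          (R4 (encR K tp hh - real (tp hh)) (encL K tp hh - real (tp (hh - 1))) x2 al) h \<le> eps"
    if c: "cfg M w t = (qT, hh, tp)" and q: "qT \<noteq> tm_acc M" "qT \<noteq> tm_rej M" for t qT hh tp x2 h
  proof -
    have wc: "wfc M (qT, hh, tp)" using wfc_cfg[OF wf, of w t] c by simp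
    have ab: "tp hh < K" "tp (hh - 1) < K" using wc by (auto simp: wfc_def KK_def less_Suc_eq)
    obtain q' s' d where dd: "tm_delta M qT (tp hh) = (q', s', d)" by (cases "tm_delta M qT (tp hh)") auto
    note ss = sim_step[OF wc q dd]
    have c': "cfg M w (Suc t) = (q', hh + d, tp(hh := s'))" using c ss(3) by (simp add: cfg_Suc)
    show ?thesis unfolding step_Sim2[OF ab dd ss(1,2)] ss(4,5) using I_SimH[OF c'] .
  qed
  have SH: "acc_within V P w (Suc n) (E (Sim qT)) 0 (R4 (encR K tp hh) (encL K tp hh) (1/2) al) h \<le> eps"
    if c: "cfg M w t = (qT, hh, tp)" for t qT hh tp h
  proof -
    have wc: "wfc M (qT, hh, tp)" using wfc_cfg[OF wf, of w t] c by simp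
    have qn: "qT < N" and fs: "fsupp tp" using wc by (auto simp: wfc_def)
    have thK: "tp hh < K" "tp (hh - 1) < K" using wc by (auto simp: wfc_def KK_def less_Suc_eq)
    have qa: "qT \<noteq> tm_acc M" using na c unfolding tm_accepts_def cfg_def by (metis fst_conv)
    show ?thesis
    proof (cases "qT = tm_rej M")
      case True then show ?thesis using step_Sim_rej ep by simp
    next
      case qr: False
      let ?c = "P w h"
      let ?a = "?c mod K" and ?b = "?c div K mod K"
      have aK: "?a < K" "?b < K" using K0 by auto
      let ?A = "acc_within V P w n (E (Sim2 qT ?a ?b)) 0
          (R4 (encR K tp hh - real ?a) (encL K tp hh - real ?b) 0 al) (h @ [(E (Sim2 qT ?a ?b), 0, ow 2 0)])"
      let ?B = "acc_within V P w n (E Test1) 0 (R4 (encR K tp hh - real ?a) (encL K tp hh - real ?b) 1 al) (h @ [(E Test1, 0, ow 2 1)])"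
      have eq: "acc_within V P w (Suc n) (E (Sim qT)) 0 (R4 (encR K tp hh) (encL K tp hh) (1/2) al) h = 1/2 * ?A + 1/2 * ?B"
        unfolding step_Sim[OF qa qr qn] pr_half by simp
      show ?thesis
      proof (cases "?a = tp hh \<and> ?b = tp (hh - 1)")
        case True
        have "?A \<le> eps" using I_Sim2H[OF c qa qr] True by metis
        moreover have "?B \<le> eps" using I_T1 .
        ultimately show ?thesis unfolding eq by simp
      next
        case False
        have "?A \<le> 4/3 * eps" using I_Sim2L aK by blast
        moreover have "bad K (encR K tp hh - real ?a) \<or> bad K (encL K tp hh - real ?b)"
        proof (cases "?a = tp hh")
          case True
          then have nb: "?b \<noteq> tp (hh - 1)" using False by simp
          obtain m where m: "encL K tp (hh - 1) = real m" using encL_nat[OF fs] by blast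
          have "encL K tp hh = real (tp (hh-1)) + real K * encL K tp (hh - 1)" using encL_rec[OF fs, of K "hh-1"] by simp
          then have "bad K (encL K tp hh - real ?b)" using bad_claim[OF aK(2) thK(2) nb m] by simp
          then show ?thesis by simp
        next
          case na': False
          obtain m where m: "encR K tp (hh + 1) = real m" using encR_nat[OF fs] by blast
          have "bad K (encR K tp hh - real ?a)" using bad_claim[OF aK(1) thK(1) na' m] encR_rec[OF fs, of K hh] by simp
          then show ?thesis by simp
        qed
        then have "?B \<le> 2/3 * eps" using I_T1b by blast
        ultimately show ?thesis unfolding eq by simp
      qed
    qed
  qed
  show ?case
    apply (intro conjI allI impI)
    apply (erule G)
    apply (erule L)
    apply (erule SH)
    apply (erule S2H; assumption)
    apply (rule T1)
    apply (rule T2)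
    apply (erule T1b)
    apply (erule T2b)
    apply (erule SL)
    apply (erule S2L; assumption)
    done
qed
end


context vs begin

lemma init_R4: "init_regs V = R4 0 0 0 0"
  by (simp add: init_regs_def dims_VV R4_def basis_mk)

lemma start_E: "start V = E GoR" by (simp add: VV_def E_simps)

lemma sound:
  assumes e0: "0 < e" and e1: "e < 1/2" and na: "\<not> tm_accepts M w"
  shows "accept_prob V P w \<le> of_rat e"
proof -
  have "\<forall>n. acc_within V P w n (E GoR) 0 (R4 0 0 0 0) [] \<le> of_rat e"
    using sound_main[OF e0 e1 na] by simp
  then show ?thesis unfolding accept_prob_def init_R4 start_E
    by (intro cSUP_least) auto
qed

lemma weigh_pattern:
  "(\<forall>r<4. act V q s c r \<noteq> Weigh) \<or> (\<exists>i<4. act V q s c i = Weigh \<and> (\<forall>r<4. r \<noteq> i \<longrightarrow> act V q s c r \<noteq> Weigh))"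
proof -
  have ae: "act V q s c r = act_v M al (dec_st N K q) s c r" for r by (rule act_E) simp
  show ?thesis
  proof (cases "dec_st N K q")
    case (Sim qq)
    then show ?thesis unfolding ae all4
      by (cases "qq = tm_acc M"; cases "qq = tm_rej M") (auto simp: act_v_def Let_def idop_def)
  next
    case (Sim2 qq a b)
    obtain q' s' d where dd: "tm_delta M qq a = (q', s', d)" by (cases "tm_delta M qq a") auto
    show ?thesis unfolding ae all4 using Sim2 dd by (auto simp: act_v_def Let_def idop_def)
  next
    case Test1 then show ?thesis unfolding ae all4 by (cases "c = 0") (auto simp: act_v_def Let_def idop_def)
  next
    case Test2 then show ?thesis unfolding ae all4 by (cases "c = 0") (auto simp: act_v_def Let_def idop_def)
  next
    case Load then show ?thesis unfolding ae all4 by (auto simp: act_v_def Let_def idop_def split: tsym.splits)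
  qed (auto simp: ae all4 act_v_def Let_def idop_def)
qed

lemma upd_form:
  assumes "os \<in> outcomes V q s c"
  shows "\<exists>y0 y1 y2 y3. update_regs V q s c (R4 x0 x1 x2 x3) os = R4 y0 y1 y2 y3"
proof -
  have g: "goodop (act V q s c r)" for r by (simp add: VV_def act_v_cases)
  have oc: "\<forall>r<4. (if act V q s c r = Weigh then (\<exists>j<2. os ! r = Some j) else os ! r = None)"
    using assms unfolding outcomes_char by blast
  have comp: "\<exists>y. (case act V q s c r of Apply Mx \<Rightarrow> apply_op Mx (mk x) | Weigh \<Rightarrow> basis_vec 2 (the (os ! r))) = mk y"
    if r: "r < 4" for r x
  proof (cases "act V q s c r = Weigh")
    case True
    have "\<exists>j<2. os ! r = Some j" using oc r True by metis
    then obtain j where j: "j < 2" "os ! r = Some j" by blast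
    then have "j = 0 \<or> j = 1" by auto
    then show ?thesis using True j basis_mk by auto
  next
    case False
    then obtain a b where "act V q s c r = Apply (aff a b)" using g[of r] unfolding goodop_def by blast
    then show ?thesis by (auto simp: apply_aff)
  qed
  obtain y0 where y0: "(case act V q s c 0 of Apply Mx \<Rightarrow> apply_op Mx (mk x0) | Weigh \<Rightarrow> basis_vec 2 (the (os ! 0))) = mk y0"
    using comp[of 0] by auto
  obtain y1 where y1: "(case act V q s c 1 of Apply Mx \<Rightarrow> apply_op Mx (mk x1) | Weigh \<Rightarrow> basis_vec 2 (the (os ! 1))) = mk y1"
    using comp[of 1] by auto
  obtain y2 where y2: "(case act V q s c 2 of Apply Mx \<Rightarrow> apply_op Mx (mk x2) | Weigh \<Rightarrow> basis_vec 2 (the (os ! 2))) = mk y2"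
    using comp[of 2] by auto
  obtain y3 where y3: "(case act V q s c 3 of Apply Mx \<Rightarrow> apply_op Mx (mk x3) | Weigh \<Rightarrow> basis_vec 2 (the (os ! 3))) = mk y3"
    using comp[of 3] by auto
  show ?thesis
    apply (rule exI[of _ y0], rule exI[of _ y1], rule exI[of _ y2], rule exI[of _ y3])
    unfolding update_R4 unfolding y0 y1 y2 y3 R4_def by (rule refl)
qed

lemma acc_le1: "acc_within V P w n q p (R4 x0 x1 x2 x3) h \<le> 1"
proof (induction n arbitrary: q p x0 x1 x2 x3 h)
  case 0 then show ?case by (simp add: acc0)
next
  case (Suc n)
  show ?case
  proof (cases "q = 0 \<or> q = 1")
    case True then show ?thesis using acc_acc acc_rej by auto
  next
    case False
    then have q: "q \<noteq> 0" "q \<noteq> 1" by auto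
    let ?s = "tape w p" and ?c = "P w h"
    have IH': "acc_within V P w n q' p' (update_regs V q ?s ?c (R4 x0 x1 x2 x3) os) h' \<le> 1"
      if "os \<in> outcomes V q ?s ?c" for q' p' os h'
      using upd_form[OF that, of x0 x1 x2 x3] Suc.IH by auto
    from weigh_pattern[of q ?s ?c] show ?thesis
    proof
      assume a: "\<forall>r<4. act V q ?s ?c r \<noteq> Weigh"
      have "onone \<in> outcomes V q ?s ?c" using outcomes_noW[OF a] by simp
      then show ?thesis unfolding step_noW[where P=P and w=w and p=p and h=h, OF q a] using IH' by blast
    next
      assume "\<exists>i<4. act V q ?s ?c i = Weigh \<and> (\<forall>r<4. r \<noteq> i \<longrightarrow> act V q ?s ?c r \<noteq> Weigh)"
      then obtain i where i: "i < 4" "act V q ?s ?c i = Weigh" "\<forall>r<4. r \<noteq> i \<longrightarrow> act V q ?s ?c r \<noteq> Weigh" by blast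
      have "\<exists>x. R4 x0 x1 x2 x3 ! i = mk x" using i(1) unfolding lt4 by (auto simp: R4_def)
      then obtain x where x: "R4 x0 x1 x2 x3 ! i = mk x" by blast
      have o: "outcomes V q ?s ?c = {ow i 0, ow i 1}"
      proof -
        have "i = 0 \<or> i = 1 \<or> i = 2 \<or> i = 3" using i(1) by arith
        then show ?thesis
        proof (elim disjE)
          assume ii: "i = 0"
          show ?thesis unfolding ii by (rule outcomes_W0) (use i ii in auto)
        next
          assume ii: "i = 1"
          show ?thesis unfolding ii by (rule outcomes_W1) (use i ii in auto)
        next
          assume ii: "i = 2"
          show ?thesis unfolding ii by (rule outcomes_W2) (use i ii in auto)
        next
          assume ii: "i = 3"
          show ?thesis unfolding ii by (rule outcomes_W3) (use i ii in auto)
        qed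
      qed
      have m0: "ow i 0 \<in> outcomes V q ?s ?c" and m1: "ow i 1 \<in> outcomes V q ?s ?c" using o by auto
      let ?A = "acc_within V P w n (fst (trans V q ?s ?c (ow i 0))) (nat (int p + snd (trans V q ?s ?c (ow i 0))))
           (update_regs V q ?s ?c (R4 x0 x1 x2 x3) (ow i 0))
           (h @ [(fst (trans V q ?s ?c (ow i 0)), nat (int p + snd (trans V q ?s ?c (ow i 0))), ow i 0)])"
      let ?B = "acc_within V P w n (fst (trans V q ?s ?c (ow i 1))) (nat (int p + snd (trans V q ?s ?c (ow i 1))))
           (update_regs V q ?s ?c (R4 x0 x1 x2 x3) (ow i 1))
           (h @ [(fst (trans V q ?s ?c (ow i 1)), nat (int p + snd (trans V q ?s ?c (ow i 1))), ow i 1)])"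
      have "pr0 x * ?A + pr1 x * ?B \<le> pr0 x * 1 + pr1 x * 1"
        using IH'[OF m0] IH'[OF m1] pr_nonneg by (intro add_mono mult_left_mono) auto
      also have "\<dots> = 1" using pr_sum by simp
      finally show ?thesis unfolding step_W[where P=P and w=w and p=p and h=h, OF q i x] .
    qed
  qed
qed

end


definition evg :: "(nat \<Rightarrow> real) \<Rightarrow> real \<Rightarrow> bool" where
  "evg f v \<longleftrightarrow> (\<exists>n0. \<forall>n\<ge>n0. v \<le> f n)"

lemma evg_shift: "(\<And>n. f (Suc n) = g n) \<Longrightarrow> evg g v \<Longrightarrow> evg f v"
proof -
  assume fg: "\<And>n. f (Suc n) = g n" and "evg g v"
  then obtain n0 where n0: "\<forall>n\<ge>n0. v \<le> g n" unfolding evg_def by blast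
  have "\<forall>n\<ge>Suc n0. v \<le> f n"
  proof (intro allI impI)
    fix n assume "Suc n0 \<le> n"
    then obtain m where "n = Suc m" "m \<ge> n0" by (cases n) auto
    then show "v \<le> f n" using n0 fg by simp
  qed
  then show ?thesis unfolding evg_def by blast
qed

lemma evg_comb: "(\<And>n. f (Suc n) = u * g1 n + u' * g2 n + c) \<Longrightarrow> 0 \<le> u \<Longrightarrow> 0 \<le> u' \<Longrightarrow>
   evg g1 v1 \<Longrightarrow> evg g2 v2 \<Longrightarrow> evg f (u * v1 + u' * v2 + c)"
proof -
  assume fg: "\<And>n. f (Suc n) = u * g1 n + u' * g2 n + c" and u: "0 \<le> u" "0 \<le> u'" and "evg g1 v1" "evg g2 v2"
  then obtain n1 n2 where n1: "\<forall>n\<ge>n1. v1 \<le> g1 n" and n2: "\<forall>n\<ge>n2. v2 \<le> g2 n" unfolding evg_def by blast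
  have "\<forall>n\<ge>Suc (max n1 n2). u * v1 + u' * v2 + c \<le> f n"
  proof (intro allI impI)
    fix n assume "Suc (max n1 n2) \<le> n"
    then obtain m where m: "n = Suc m" "m \<ge> n1" "m \<ge> n2" by (cases n) auto
    have "u * v1 \<le> u * g1 m" using n1 m u by (intro mult_left_mono) auto
    moreover have "u' * v2 \<le> u' * g2 m" using n2 m u by (intro mult_left_mono) auto
    ultimately show "u * v1 + u' * v2 + c \<le> f n" using fg m by simp
  qed
  then show ?thesis unfolding evg_def by blast
qed

lemma evg_mono: "v \<le> v' \<Longrightarrow> evg f v' \<Longrightarrow> evg f v"
  unfolding evg_def by (meson order.trans)

context vs begin

definition strat :: "nat \<Rightarrow> real list list \<Rightarrow> nat" where
  "strat q regs = (case dec_st N K q of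
      Sim qT \<Rightarrow> nat (\<lfloor>regs ! 0 ! 1\<rfloor> mod int K) + K * nat (\<lfloor>regs ! 1 ! 1\<rfloor> mod int K)
    | Test1 \<Rightarrow> (if regs ! 0 ! 1 = 0 then 0 else 1)
    | Test2 \<Rightarrow> (if regs ! 1 ! 1 = 0 then 0 else 1)
    | _ \<Rightarrow> 0)"

fun rp :: "'a list \<Rightarrow> history \<Rightarrow> nat \<times> nat \<times> real list list" where
  "rp w [] = (2, 0, init_regs V)"
| "rp w ((q', p', os) # hr) = (case rp w hr of (q, p, regs) \<Rightarrow>
      (q', p', update_regs V q (tape w p) (strat q regs) regs os))"

definition honP :: "'a prover" where
  "honP w h = (case rp w (rev h) of (q, p, regs) \<Rightarrow> strat q regs)"

definition Inv :: "'a list \<Rightarrow> nat \<Rightarrow> nat \<Rightarrow> real list list \<Rightarrow> history \<Rightarrow> bool" where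
  "Inv w q p regs h \<longleftrightarrow> rp w (rev h) = (q, p, regs)"

lemma Inv_P: "Inv w q p regs h \<Longrightarrow> honP w h = strat q regs"
  by (simp add: Inv_def honP_def)

lemma Inv_step: "Inv w q p regs h \<Longrightarrow>
   Inv w q' p' (update_regs V q (tape w p) (honP w h) regs os) (h @ [(q', p', os)])"
  by (simp add: Inv_def honP_def)

lemma Inv_start: "Inv w (E GoR) 0 (R4 0 0 0 0) []"
  by (simp add: Inv_def init_R4 E_simps)

lemma strat_lt: "strat q regs < K * K"
proof -
  have a: "nat (\<lfloor>x\<rfloor> mod int K) < K" for x :: real using K0 by (simp add: nat_less_iff)
  have b: "nat (\<lfloor>x\<rfloor> mod int K) + K * nat (\<lfloor>y\<rfloor> mod int K) < K * K" for x y :: real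
  proof -
    have "nat (\<lfloor>x\<rfloor> mod int K) + K * nat (\<lfloor>y\<rfloor> mod int K) < K + K * nat (\<lfloor>y\<rfloor> mod int K)" using a[of x] by simp
    also have "\<dots> = K * (nat (\<lfloor>y\<rfloor> mod int K) + 1)" by simp
    also have "\<dots> \<le> K * K" using a[of y] by (intro mult_le_mono2) simp
    finally show ?thesis .
  qed
  have "1 < K * K" using K2 by (metis less_1_mult numeral_le_iff one_less_numeral_iff semiring_norm(76) order.strict_trans2 one_less_numeral_iff)
  then show ?thesis
  proof (cases "dec_st N K q")
    case (Sim qq)
    then have "strat q regs = nat (\<lfloor>regs ! 0 ! 1\<rfloor> mod int K) + K * nat (\<lfloor>regs ! 1 ! 1\<rfloor> mod int K)"
      by (simp add: strat_def)
    then show ?thesis using b by metis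
  qed (use K0 in \<open>auto simp: strat_def\<close>)
qed

lemma valid_honP: "valid_prover V honP"
  unfolding valid_prover_def honP_def by (auto simp: VV_def strat_lt split: prod.splits)

lemma R4_01: "R4 x0 x1 x2 x3 ! 0 ! 1 = x0" "R4 x0 x1 x2 x3 ! 1 ! 1 = x1"
  by (simp_all add: R4_def mk_def)

lemma strat_Sim: "q < N \<Longrightarrow> x0 = real m0 \<Longrightarrow> x1 = real m1 \<Longrightarrow>
   strat (E (Sim q)) (R4 x0 x1 x2 x3) = m0 mod K + K * (m1 mod K)"
  unfolding strat_def dec_Sim R4_01 by (simp add: nat_mod_distrib)

lemma strat_T1: "strat (E Test1) (R4 x0 x1 x2 x3) = (if x0 = 0 then 0 else 1)"
  unfolding strat_def dec_T1 R4_01 by simp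
lemma strat_T2: "strat (E Test2) (R4 x0 x1 x2 x3) = (if x1 = 0 then 0 else 1)"
  unfolding strat_def dec_T2 R4_01 by simp

end


context vs begin

lemma honest_claim:
  assumes wc: "wfc M (qT, hh, tp)"
  shows "strat (E (Sim qT)) (R4 (encR K tp hh) (encL K tp hh) x2 x3) mod K = tp hh"
    "strat (E (Sim qT)) (R4 (encR K tp hh) (encL K tp hh) x2 x3) div K mod K = tp (hh - 1)"
    "\<exists>Q::nat. encR K tp hh - real (tp hh) = real K * real Q"
    "\<exists>Q::nat. encL K tp hh - real (tp (hh - 1)) = real K * real Q"
proof -
  have qn: "qT < N" and fs: "fsupp tp" and th: "tp hh < K" "tp (hh - 1) < K"
    using wc by (auto simp: wfc_def KK_def less_Suc_eq)
  obtain m0 where m0: "encR K tp hh = real m0" using encR_nat[OF fs] by blast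
  obtain m1 where m1: "encL K tp hh = real m1" using encL_nat[OF fs] by blast
  obtain r0 where r0: "encR K tp (hh + 1) = real r0" using encR_nat[OF fs] by blast
  obtain r1 where r1: "encL K tp (hh - 1) = real r1" using encL_nat[OF fs] by blast
  have "real m0 = real (tp hh) + real K * real r0" using encR_rec[OF fs, of K hh] m0 r0 by simp
  then have e0: "m0 = tp hh + K * r0" by (metis of_nat_add of_nat_eq_iff of_nat_mult)
  have "real m1 = real (tp (hh - 1)) + real K * real r1" using encL_rec[OF fs, of K "hh - 1"] m1 r1 by simp
  then have e1: "m1 = tp (hh - 1) + K * r1" by (metis of_nat_add of_nat_eq_iff of_nat_mult)
  have s: "strat (E (Sim qT)) (R4 (encR K tp hh) (encL K tp hh) x2 x3) = tp hh + K * tp (hh - 1)"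
    unfolding strat_Sim[OF qn m0 m1] e0 e1 using th by simp
  show "strat (E (Sim qT)) (R4 (encR K tp hh) (encL K tp hh) x2 x3) mod K = tp hh"
    "strat (E (Sim qT)) (R4 (encR K tp hh) (encL K tp hh) x2 x3) div K mod K = tp (hh - 1)"
    unfolding s using th by simp_all
  show "\<exists>Q::nat. encR K tp hh - real (tp hh) = real K * real Q" using m0 r0 e0 by (intro exI[of _ r0]) simp
  show "\<exists>Q::nat. encL K tp hh - real (tp (hh - 1)) = real K * real Q" using m1 r1 e1 by (intro exI[of _ r1]) simp
qed


abbreviation "AC w n q p regs h \<equiv> acc_within V honP w n q p regs h"

lemma TC2:
  assumes Gm: "\<And>p x0 x1 x2 x3 h. p \<le> length w + 1 \<Longrightarrow> Inv w (E GoR) p (R4 x0 x1 x2 x3) h \<Longrightarrow>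
      evg (\<lambda>n. AC w n (E GoR) p (R4 x0 x1 x2 x3) h) nu"
  shows "Inv w (E Test2) 0 (R4 x0 (real K * real Q) x2 x3) h \<Longrightarrow>
      evg (\<lambda>n. AC w n (E Test2) 0 (R4 x0 (real K * real Q) x2 x3) h) nu"
proof (induction Q arbitrary: x0 x2 x3 h)
  case 0
  have c: "honP w h = 0" using Inv_P[OF 0] strat_T2 by simp
  have inv': "Inv w (E GoR) 0 (R4 x0 0 x2 x3) (h @ [(E GoR, 0, ow 1 0)])"
    using Inv_step[OF 0, of "E GoR" 0 "ow 1 0"] unfolding c upd_T2_stop .
  have "evg (\<lambda>n. AC w n (E GoR) 0 (R4 x0 0 x2 x3) (h @ [(E GoR, 0, ow 1 0)])) nu" using Gm inv' by simp
  then show ?case by (rule evg_shift[rotated]) (simp add: step_T2_stop[where P=honP and w=w and h=h, OF c] pr_zero)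
next
  case (Suc Q)
  have nz: "real K * real (Suc Q) \<noteq> 0" using K0 by simp
  have c: "honP w h \<noteq> 0" using Inv_P[OF Suc.prems] strat_T2 nz by simp
  have e: "real K * real (Suc Q) - real K = real K * real Q" by (simp add: algebra_simps)
  have inv': "Inv w (E Test2) 0 (R4 x0 (real K * real Q) x2 x3) (h @ [(E Test2, 0, onone)])"
    using Inv_step[OF Suc.prems, of "E Test2" 0 onone] unfolding upd_T2_go[OF c] e .
  show ?case by (rule evg_shift[OF _ Suc.IH[OF inv']]) (unfold step_T2_go[where P=honP and w=w and h=h, OF c] e, rule refl)
qed

lemma TC1:
  assumes Gm: "\<And>p x0 x1 x2 x3 h. p \<le> length w + 1 \<Longrightarrow> Inv w (E GoR) p (R4 x0 x1 x2 x3) h \<Longrightarrow>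
      evg (\<lambda>n. AC w n (E GoR) p (R4 x0 x1 x2 x3) h) nu"
  shows "Inv w (E Test1) 0 (R4 (real K * real Q0) (real K * real Q1) x2 x3) h \<Longrightarrow>
      evg (\<lambda>n. AC w n (E Test1) 0 (R4 (real K * real Q0) (real K * real Q1) x2 x3) h) nu"
proof (induction Q0 arbitrary: x2 x3 h)
  case 0
  have c: "honP w h = 0" using Inv_P[OF 0] strat_T1 by simp
  have inv': "Inv w (E Test2) 0 (R4 0 (real K * real Q1) x2 x3) (h @ [(E Test2, 0, ow 0 0)])"
    using Inv_step[OF 0, of "E Test2" 0 "ow 0 0"] unfolding c upd_T1_stop .
  have "evg (\<lambda>n. AC w n (E Test2) 0 (R4 0 (real K * real Q1) x2 x3) (h @ [(E Test2, 0, ow 0 0)])) nu"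
    by (rule TC2[OF Gm inv'])
  then show ?case by (rule evg_shift[rotated]) (simp add: step_T1_stop[where P=honP and w=w and h=h, OF c] pr_zero)
next
  case (Suc Q)
  have nz: "real K * real (Suc Q) \<noteq> 0" using K0 by simp
  have c: "honP w h \<noteq> 0" using Inv_P[OF Suc.prems] strat_T1 nz by simp
  have e: "real K * real (Suc Q) - real K = real K * real Q" by (simp add: algebra_simps)
  have inv': "Inv w (E Test1) 0 (R4 (real K * real Q) (real K * real Q1) x2 x3) (h @ [(E Test1, 0, onone)])"
    using Inv_step[OF Suc.prems, of "E Test1" 0 onone] unfolding upd_T1_go[OF c] e .
  show ?case by (rule evg_shift[OF _ Suc.IH[OF inv']]) (unfold step_T1_go[where P=honP and w=w and h=h, OF c] e, rule refl)
qed

lemma SC: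
  assumes Gm: "\<And>p x0 x1 x2 x3 h. p \<le> length w + 1 \<Longrightarrow> Inv w (E GoR) p (R4 x0 x1 x2 x3) h \<Longrightarrow>
      evg (\<lambda>n. AC w n (E GoR) p (R4 x0 x1 x2 x3) h) nu"
    and accT: "fst (cfg M w T) = tm_acc M" and least: "\<And>t. t < T \<Longrightarrow> fst (cfg M w t) \<noteq> tm_acc M"
    and al01: "0 \<le> al" "al \<le> 1"
  shows "j \<le> T \<Longrightarrow> cfg M w (T - j) = (qT, hh, tp) \<Longrightarrow>
     Inv w (E (Sim qT)) 0 (R4 (encR K tp hh) (encL K tp hh) (1/2) al) h \<Longrightarrow>
     evg (\<lambda>n. AC w n (E (Sim qT)) 0 (R4 (encR K tp hh) (encL K tp hh) (1/2) al) h)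
       ((1/2)^j * al + (1 - (1/2)^j * al) * nu)"
proof (induction j arbitrary: qT hh tp h)
  case 0
  have qa: "qT = tm_acc M" using accT 0 by simp
  let ?R = "R4 (encR K tp hh) (encL K tp hh) (1/2) 0"
  have inv': "Inv w (E GoR) 0 ?R (h @ [(E GoR, 0, ow 3 0)])"
    using Inv_step[OF 0(3), of "E GoR" 0 "ow 3 0"] unfolding qa upd_Sim_acc .
  have g: "evg (\<lambda>n. AC w n (E GoR) 0 ?R (h @ [(E GoR, 0, ow 3 0)])) nu" using Gm inv' by simp
  have "evg (\<lambda>n. AC w n (E (Sim qT)) 0 (R4 (encR K tp hh) (encL K tp hh) (1/2) al) h)
     (pr0 al * nu + 0 * nu + pr1 al)"
    by (rule evg_comb[OF _ pr_nonneg(1) order.refl g g]) (simp add: qa step_Sim_acc)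
  moreover have "pr0 al * nu + 0 * nu + pr1 al = (1/2)^0 * al + (1 - (1/2)^0 * al) * nu"
  proof -
    have pa: "pr0 al = 1 - al" "pr1 al = al" using pr_prob[OF al01] by auto
    show ?thesis unfolding pa by (simp add: algebra_simps)
  qed
  ultimately show ?case by simp
next
  case (Suc j)
  let ?t = "T - Suc j"
  have tl: "?t < T" using Suc.prems(1) by simp
  have c: "cfg M w ?t = (qT, hh, tp)" by (rule Suc.prems(2))
  have qa: "qT \<noteq> tm_acc M" using least[OF tl] c by simp
  have qr: "qT \<noteq> tm_rej M"
  proof
    assume "qT = tm_rej M"
    then have "fst (cfg M w (?t + (T - ?t))) = tm_rej M" using rej_stays[of M w ?t "T - ?t"] c by simp
    moreover have "?t + (T - ?t) = T" using tl by simp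
    ultimately show False using accT accrej(1) by simp
  qed
  have wc: "wfc M (qT, hh, tp)" using wfc_cfg[OF wf, of w ?t] c by simp
  have qn: "qT < N" using wc by (simp add: wfc_def)
  have thK: "tp hh < K" "tp (hh - 1) < K" using wc by (auto simp: wfc_def KK_def less_Suc_eq)
  note inv = Suc.prems(3)
  have cP: "honP w h = strat (E (Sim qT)) (R4 (encR K tp hh) (encL K tp hh) (1/2) al)" by (rule Inv_P[OF inv])
  note hc = honest_claim[OF wc]
  have ca: "honP w h mod K = tp hh" and cb: "honP w h div K mod K = tp (hh - 1)" using hc(1,2) cP by simp_all
  obtain Q0 where Q0: "encR K tp hh - real (tp hh) = real K * real Q0" using hc(3) by blast
  obtain Q1 where Q1: "encL K tp hh - real (tp (hh - 1)) = real K * real Q1" using hc(4) by blast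
  let ?a = "tp hh" and ?b = "tp (hh - 1)"
  let ?R2 = "R4 (encR K tp hh - real ?a) (encL K tp hh - real ?b) 0 al"
  let ?h1 = "h @ [(E (Sim2 qT ?a ?b), 0, ow 2 0)]"
  have inv1: "Inv w (E (Sim2 qT ?a ?b)) 0 ?R2 ?h1"
    using Inv_step[OF inv, of "E (Sim2 qT ?a ?b)" 0 "ow 2 0"] unfolding upd_Sim0[OF qa qr qn] ca cb .
  obtain q' s' d where dd: "tm_delta M qT ?a = (q', s', d)" by (cases "tm_delta M qT ?a") auto
  note ss = sim_step[OF wc qa qr dd]
  let ?tp' = "tp(hh := s')"
  have c': "cfg M w (T - j) = (q', hh + d, ?tp')"
  proof -
    have "T - j = Suc ?t" using Suc.prems(1) by simp
    then show ?thesis using c ss(3) by (simp add: cfg_Suc)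
  qed
  let ?R3 = "R4 (encR K ?tp' (hh + d)) (encL K ?tp' (hh + d)) (1/2) al"
  let ?h1' = "?h1 @ [(E (Sim q'), 0, onone)]"
  have inv1': "Inv w (E (Sim q')) 0 ?R3 ?h1'"
    using Inv_step[OF inv1, of "E (Sim q')" 0 onone] unfolding upd_Sim2[OF thK dd ss(1,2)] ss(4,5) .
  have ev3: "evg (\<lambda>n. AC w n (E (Sim q')) 0 ?R3 ?h1') ((1/2)^j * al + (1 - (1/2)^j * al) * nu)"
  proof -
    have jT: "j \<le> T" using Suc.prems(1) by simp
    show ?thesis by (rule Suc.IH[OF jT c' inv1'])
  qed
  have ev2: "evg (\<lambda>n. AC w n (E (Sim2 qT ?a ?b)) 0 ?R2 ?h1) ((1/2)^j * al + (1 - (1/2)^j * al) * nu)"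
    by (rule evg_shift[OF _ ev3]) (unfold step_Sim2[OF thK dd ss(1,2)] ss(4,5), rule refl)
  let ?RT = "R4 (encR K tp hh - real ?a) (encL K tp hh - real ?b) 1 al"
  let ?h2 = "h @ [(E Test1, 0, ow 2 1)]"
  have inv2: "Inv w (E Test1) 0 ?RT ?h2"
    using Inv_step[OF inv, of "E Test1" 0 "ow 2 1"] unfolding upd_Sim1[OF qa qr qn] ca cb .
  have evT: "evg (\<lambda>n. AC w n (E Test1) 0 ?RT ?h2) nu"
    using TC1[OF Gm, of Q0 Q1 1 al ?h2] inv2 unfolding Q0 Q1 by simp
  have "evg (\<lambda>n. AC w n (E (Sim qT)) 0 (R4 (encR K tp hh) (encL K tp hh) (1/2) al) h)
     (1/2 * ((1/2)^j * al + (1 - (1/2)^j * al) * nu) + 1/2 * nu + 0)"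
    by (rule evg_comb[OF _ _ _ ev2 evT]) (simp_all add: step_Sim[OF qa qr qn, where P=honP and w=w and h=h] ca cb pr_half)
  moreover have "1/2 * ((1/2)^j * al + (1 - (1/2)^j * al) * nu) + 1/2 * nu + 0 =
      (1/2)^(Suc j) * al + (1 - (1/2)^(Suc j) * al) * nu"
    by (simp add: algebra_simps)
  ultimately show ?case by simp
qed

lemma LC:
  assumes Gm: "\<And>p x0 x1 x2 x3 h. p \<le> length w + 1 \<Longrightarrow> Inv w (E GoR) p (R4 x0 x1 x2 x3) h \<Longrightarrow>
      evg (\<lambda>n. AC w n (E GoR) p (R4 x0 x1 x2 x3) h) nu"
    and accT: "fst (cfg M w T) = tm_acc M" and least: "\<And>t. t < T \<Longrightarrow> fst (cfg M w t) \<noteq> tm_acc M"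
    and al01: "0 \<le> al" "al \<le> 1"
  shows "p \<le> length w \<Longrightarrow> Inv w (E Load) p (R4 (encR K (t0 w) (int p)) 0 (1/2) al) h \<Longrightarrow>
     evg (\<lambda>n. AC w n (E Load) p (R4 (encR K (t0 w) (int p)) 0 (1/2) al) h)
       ((1/2)^T * al + (1 - (1/2)^T * al) * nu)"
proof (induction p arbitrary: h)
  case 0
  have tl: "tape w 0 = LEnd" by (simp add: tape_def)
  have z: "encL K (t0 w) 0 = 0" by (rule encL_zero) (simp add: t0_eq)
  let ?R = "R4 (encR K (t0 w) 0) (encL K (t0 w) 0) (1/2) al"
  have inv': "Inv w (E (Sim (tm_start M))) 0 ?R (h @ [(E (Sim (tm_start M)), 0, onone)])"
    using Inv_step[OF 0(2), of "E (Sim (tm_start M))" 0 onone] unfolding tl upd_Load_L z by simp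
  have c: "cfg M w (T - T) = (tm_start M, 0, t0 w)" using cfg0 by simp
  have "evg (\<lambda>n. AC w n (E (Sim (tm_start M))) 0 ?R (h @ [(E (Sim (tm_start M)), 0, onone)]))
     ((1/2)^T * al + (1 - (1/2)^T * al) * nu)"
    by (rule SC[OF Gm accT least al01 order.refl c inv'])
  then show ?case by (rule evg_shift[rotated]) (simp add: step_Load_L[OF tl] z)
next
  case (Suc p)
  have ts: "tape w (Suc p) = Sym (w ! p)" using Suc.prems(1) by (simp add: tape_def)
  have fs: "fsupp (t0 w)" using wfc_cfg[OF wf, of w 0] by (simp add: cfg0 wfc_def)
  have r: "real K * encR K (t0 w) (int (Suc p)) + real (tm_enc M (w ! p)) = encR K (t0 w) (int p)"
    using encR_rec[OF fs, of K "int p"] Suc.prems(1) by (simp add: t0_eq add.commute)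
  have inv': "Inv w (E Load) p (R4 (encR K (t0 w) (int p)) 0 (1/2) al) (h @ [(E Load, p, onone)])"
    using Inv_step[OF Suc.prems(2), of "E Load" p onone] unfolding ts upd_Load r .
  have "evg (\<lambda>n. AC w n (E Load) p (R4 (encR K (t0 w) (int p)) 0 (1/2) al) (h @ [(E Load, p, onone)]))
     ((1/2)^T * al + (1 - (1/2)^T * al) * nu)"
    using Suc.IH[OF _ inv'] Suc.prems(1) by simp
  then show ?case by (rule evg_shift[rotated]) (unfold step_Load[OF ts] r, simp)
qed

lemma GC:
  assumes Gm: "\<And>p x0 x1 x2 x3 h. p \<le> length w + 1 \<Longrightarrow> Inv w (E GoR) p (R4 x0 x1 x2 x3) h \<Longrightarrow>
      evg (\<lambda>n. AC w n (E GoR) p (R4 x0 x1 x2 x3) h) nu"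
    and accT: "fst (cfg M w T) = tm_acc M" and least: "\<And>t. t < T \<Longrightarrow> fst (cfg M w t) \<noteq> tm_acc M"
    and al01: "0 \<le> al" "al \<le> 1"
  shows "p + k = length w + 1 \<Longrightarrow> Inv w (E GoR) p (R4 x0 x1 x2 x3) h \<Longrightarrow>
     evg (\<lambda>n. AC w n (E GoR) p (R4 x0 x1 x2 x3) h)
       ((1/2)^T * al + (1 - (1/2)^T * al) * nu)"
proof (induction k arbitrary: p x0 x1 x2 x3 h)
  case 0
  then have pl: "p = length w + 1" by simp
  have tr: "tape w p = REnd" using pl by (simp add: tape_def)
  have z: "encR K (t0 w) (int (length w)) = 0" by (rule encR_zero) (simp add: t0_eq)
  have pm: "p - 1 = length w" using pl by simp
  have inv': "Inv w (E Load) (length w) (R4 (encR K (t0 w) (int (length w))) 0 (1/2) al) (h @ [(E Load, length w, onone)])"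
    using Inv_step[OF 0(2), of "E Load" "length w" onone] unfolding upd_GoR z .
  have "evg (\<lambda>n. AC w n (E Load) (length w) (R4 (encR K (t0 w) (int (length w))) 0 (1/2) al) (h @ [(E Load, length w, onone)]))
     ((1/2)^T * al + (1 - (1/2)^T * al) * nu)"
    by (rule LC[OF Gm accT least al01 order.refl inv'])
  then show ?case by (rule evg_shift[rotated]) (simp add: step_GoR pl z tape_def)
next
  case (Suc k)
  have tr: "tape w p \<noteq> REnd" using Suc.prems(1) by (simp add: tape_def)
  have inv': "Inv w (E GoR) (Suc p) (R4 0 0 (1/2) al) (h @ [(E GoR, Suc p, onone)])"
    using Inv_step[OF Suc.prems(2), of "E GoR" "Suc p" onone] unfolding upd_GoR .
  have "evg (\<lambda>n. AC w n (E GoR) (Suc p) (R4 0 0 (1/2) al) (h @ [(E GoR, Suc p, onone)]))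
     ((1/2)^T * al + (1 - (1/2)^T * al) * nu)"
    using Suc.IH[OF _ inv'] Suc.prems(1) by simp
  then show ?case by (rule evg_shift[rotated]) (simp add: step_GoR tr)
qed

lemma GM:
  assumes accT: "fst (cfg M w T) = tm_acc M" and least: "\<And>t. t < T \<Longrightarrow> fst (cfg M w t) \<noteq> tm_acc M"
    and al01: "0 \<le> al" "al \<le> 1"
  shows "p \<le> length w + 1 \<Longrightarrow> Inv w (E GoR) p (R4 x0 x1 x2 x3) h \<Longrightarrow>
     evg (\<lambda>n. AC w n (E GoR) p (R4 x0 x1 x2 x3) h) (1 - (1 - (1/2)^T * al) ^ m)"
proof (induction m arbitrary: p x0 x1 x2 x3 h)
  case 0
  show ?case unfolding evg_def using acc_nonneg by simp
next
  case (Suc m)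
  have Gm: "\<And>p x0 x1 x2 x3 h. p \<le> length w + 1 \<Longrightarrow> Inv w (E GoR) p (R4 x0 x1 x2 x3) h \<Longrightarrow>
      evg (\<lambda>n. AC w n (E GoR) p (R4 x0 x1 x2 x3) h) (1 - (1 - (1/2)^T * al) ^ m)"
    using Suc.IH by blast
  have k: "p + (length w + 1 - p) = length w + 1" using Suc.prems(1) by simp
  have "evg (\<lambda>n. AC w n (E GoR) p (R4 x0 x1 x2 x3) h)
      ((1/2)^T * al + (1 - (1/2)^T * al) * (1 - (1 - (1/2)^T * al) ^ m))"
    by (rule GC[OF Gm accT least al01 k Suc.prems(2)])
  moreover have "(1/2)^T * al + (1 - (1/2)^T * al) * (1 - (1 - (1/2)^T * al) ^ m) = 1 - (1 - (1/2)^T * al) ^ Suc m"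
    by (simp add: algebra_simps)
  ultimately show ?case by simp
qed
end


context vs begin

lemma complete:
  assumes e0: "0 < e" and e1: "e < 1/2" and acc: "tm_accepts M w"
  shows "accept_prob V honP w = 1"
proof -
  define T where "T = (LEAST t. fst (cfg M w t) = tm_acc M)"
  have ex: "\<exists>t. fst (cfg M w t) = tm_acc M" using acc unfolding tm_accepts_def cfg_def by blast
  have accT: "fst (cfg M w T) = tm_acc M" unfolding T_def using ex by (rule LeastI_ex)
  have least: "\<And>t. t < T \<Longrightarrow> fst (cfg M w t) \<noteq> tm_acc M" unfolding T_def using not_less_Least by blast
  have alp: "0 < al" using e0 by simp
  have al1: "al \<le> 1"
  proof -
    have "e / 3 \<le> 1" using e1 by simp
    then show ?thesis by (metis of_rat_1 of_rat_less_eq)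
  qed
  have al01: "0 \<le> al" "al \<le> 1" using alp al1 by auto
  define f where "f n = acc_within V honP w n (start V) 0 (init_regs V) []" for n
  have fE: "f n = AC w n (E GoR) 0 (R4 0 0 0 0) []" for n by (simp add: f_def start_E init_R4)
  define dl where "dl = (1/2::real)^T * al"
  have dl0: "0 < dl" using alp by (simp add: dl_def)
  have ev: "evg f (1 - (1 - dl) ^ m)" for m
    unfolding f_def start_E init_R4 dl_def using GM[OF accT least al01 le0 Inv_start] by simp
  have le1: "f n \<le> 1" for n unfolding fE by (rule acc_le1)
  have bdd: "bdd_above (range f)" by (rule bdd_aboveI2) (rule le1)
  have S1: "(SUP n. f n) \<le> 1" using le1 by (intro cSUP_least) auto
  have S2: "(SUP n. f n) \<ge> 1"
  proof (rule ccontr)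
    assume "\<not> (SUP n. f n) \<ge> 1"
    then have "1 - (SUP n. f n) > 0" by simp
    moreover have "1 - dl < 1" using dl0 by simp
    ultimately obtain m where m: "(1 - dl) ^ m < 1 - (SUP n. f n)" using real_arch_pow_inv by blast
    obtain n0 where "\<forall>n\<ge>n0. 1 - (1 - dl) ^ m \<le> f n" using ev[of m] unfolding evg_def by blast
    then have "1 - (1 - dl) ^ m \<le> f n0" by simp
    moreover have "f n0 \<le> (SUP n. f n)" by (rule cSUP_upper[OF UNIV_I bdd])
    ultimately show False using m by simp
  qed
  show ?thesis unfolding accept_prob_def using S1 S2 f_def by simp
qed

end

theorem theorem4:
  fixes L :: "'a::finite list set" and eps :: rat
  assumes "turing_recognizable L" and "0 < eps" and "eps < 1/2"
  shows "\<exists>V :: 'a adfa. wf_adfa V \<and> rational_valued V \<and>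
           weakly_verifies V L (of_rat eps) \<and> perfect_completeness V L"
proof -
  obtain M :: "'a tm" where wf: "wf_tm M" and LM: "\<And>w. w \<in> L \<longleftrightarrow> tm_accepts M w"
    using assms(1) unfolding turing_recognizable_def by blast
  interpret vs M eps by unfold_locales (rule wf)
  have c: "\<forall>w \<in> L. accept_prob V honP w = 1" using complete[OF assms(2,3)] LM by blast
  have s: "\<forall>w. w \<notin> L \<longrightarrow> (\<forall>P. valid_prover V P \<longrightarrow> accept_prob V P w \<le> of_rat eps)"
    using sound[OF assms(2,3)] LM by blast
  have "wf_adfa V" by (rule wf_VV[OF wf])
  moreover have "rational_valued V" by (rule rat_VV)
  moreover have "weakly_verifies V L (of_rat eps)"
    unfolding weakly_verifies_def
  proof (intro conjI)
    show "\<exists>P. valid_prover V P \<and> (\<forall>w\<in>L. 1 - of_rat eps \<le> accept_prob V P w)"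
    proof (intro exI conjI)
      show "valid_prover V honP" by (rule valid_honP)
      show "\<forall>w\<in>L. 1 - of_rat eps \<le> accept_prob V honP w" using c assms(2) by simp
    qed
  qed (rule s)
  moreover have "perfect_completeness V L"
    unfolding perfect_completeness_def using valid_honP c by blast
  ultimately show ?thesis by blast
qed


end
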